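(* Let $C$ be a finite set of candidates, $>$ a tie-breaking order on $C$, and $V$ a preference profile. Every GS-game for $V$ under 3-Approval that satisfies the Minimality Assumption has a Nash equilibrium in pure strategies.
   Context: Each voter $i$ has a strict linear order $v_i$ over $C$; $x\succ_i y$ means $i$ ranks $x$ above $y$; $\mathrm{top}_k(v)$ is the set of the $k$ highest-ranked candidates of $v$. $k$-Approval: each candidate gets one point from each voter ranking her among his top $k$; the highest score wins, ties broken in favour of the candidate highest in the fixed strict linear order $>$. Write $\mathcal{R}$ for the rule and $(V_{-i},v_i')$ for $V$ with $v_i$ replaced by $v_i'$. A GS-manipulation of voter $i$ at $V$ is a vote $v_i'$ such that $i$ strictly prefers $\mathcal{R}(V_{-i},v_i')$ to $\mathcal{R}(V)$ and for every vote $v_i''$ either $\mathcal{R}(V_{-i},v_i'')=\mathcal{R}(V_{-i},v_i')$ or $i$ strictly prefers $\mathcal{R}(V_{-i},v_i')$ to $\mathcal{R}(V_{-i},v_i'')$; it is in favour of $x=\mathcal{R}(V_{-i},v_i')$; $i$ is a GS-manipulator if he has one. GS-game for $V$: players are all GS-manipulators at $V$; player $i$'s action set $A_i$ consists of $v_i$ and a (possibly empty) subset of his GS-manipulations; non-players vote sincerely; players compare action profiles via their preferences over the resulting winners. Pure Nash equilibrium: no player can obtain a strictly preferred winner by switching to another action of his own action set. Let $w=\mathcal{R}(V)$. A GS-manipulation $v_i'$ in favour of $x$ is of Type 1 if $w,x\notin\mathrm{top}_k(v_i)$, and of Type 2 if $w,x\in\mathrm{top}_k(v_i)$. A Type 1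 GS-manipulation in favour of $x$ is minimal if $\mathrm{top}_k(v_i')$ is obtained from $\mathrm{top}_k(v_i)$ by removing the candidate in $k$-th position of $v_i$ and adding $x$ (which is placed in $k$-th position). A Type 2 GS-manipulation $v_i'$ is minimal if the number $\ell=|\mathrm{top}_k(v_i)\setminus\mathrm{top}_k(v_i')|$ of candidates moved out of the top $k$ is the smallest possible among GS-manipulations of $i$, and $\mathrm{top}_k(v_i')\setminus\mathrm{top}_k(v_i)$ consists of the $\ell$ candidates ranked highest by $v_i$ among those not in $\mathrm{top}_k(v_i)$. Minimality Assumption: for every player $j$, all GS-manipulations in $A_j$ are minimal. *)

theory Defs
  imports Main
begin

text \<open>A vote (strict linear
order over C) is represented as a list without repetitions whose set is C,
the first entry being the most preferred candidate.\<close>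

definition is_vote :: "'c set \<Rightarrow> 'c list \<Rightarrow> bool" where
  "is_vote C v \<longleftrightarrow> distinct v \<and> set v = C"

definition prefers :: "'c list \<Rightarrow> 'c \<Rightarrow> 'c \<Rightarrow> bool" where
  "prefers v x y \<longleftrightarrow> (\<exists>i j. i < j \<and> j < length v \<and> v ! i = x \<and> v ! j = y)"

definition top :: "nat \<Rightarrow> 'c list \<Rightarrow> 'c set" where
  "top k v = set (take k v)"

definition score :: "nat \<Rightarrow> 'v set \<Rightarrow> ('v \<Rightarrow> 'c list) \<Rightarrow> 'c \<Rightarrow> nat" where
  "score k N V x = card {i \<in> N. x \<in> top k (V i)}"

text \<open>k-Approval winner; the tie-breaking order is the list tb (earlier = higher),
and set tb = C.\<close>
definition kapp :: "nat \<Rightarrow> 'c list \<Rightarrow> 'v set \<Rightarrow> ('v \<Rightarrow> 'c list) \<Rightarrow> 'c" where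
  "kapp k tb N V =
     hd (filter (\<lambda>x. score k N V x = Max (score k N V ` set tb)) tb)"

definition gs_manipulation ::
  "nat \<Rightarrow> 'c list \<Rightarrow> 'v set \<Rightarrow> ('v \<Rightarrow> 'c list) \<Rightarrow> 'v \<Rightarrow> 'c list \<Rightarrow> bool" where
  "gs_manipulation k tb N V i v' \<longleftrightarrow>
     i \<in> N \<and> is_vote (set tb) v' \<and>
     prefers (V i) (kapp k tb N (V(i := v'))) (kapp k tb N V) \<and>
     (\<forall>v''. is_vote (set tb) v'' \<longrightarrow>
        kapp k tb N (V(i := v'')) = kapp k tb N (V(i := v')) \<or>
        prefers (V i) (kapp k tb N (V(i := v'))) (kapp k tb N (V(i := v''))))"

definition gs_manipulator ::
  "nat \<Rightarrow> 'c list \<Rightarrow> 'v set \<Rightarrow> ('v \<Rightarrow> 'c list) \<Rightarrow> 'v \<Rightarrow> bool" where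
  "gs_manipulator k tb N V i \<longleftrightarrow> (\<exists>v'. gs_manipulation k tb N V i v')"

definition players :: "nat \<Rightarrow> 'c list \<Rightarrow> 'v set \<Rightarrow> ('v \<Rightarrow> 'c list) \<Rightarrow> 'v set" where
  "players k tb N V = {i \<in> N. gs_manipulator k tb N V i}"

definition gs_game ::
  "nat \<Rightarrow> 'c list \<Rightarrow> 'v set \<Rightarrow> ('v \<Rightarrow> 'c list) \<Rightarrow> ('v \<Rightarrow> 'c list set) \<Rightarrow> bool" where
  "gs_game k tb N V A \<longleftrightarrow>
     (\<forall>i \<in> players k tb N V.
        V i \<in> A i \<and> A i \<subseteq> insert (V i) {v'. gs_manipulation k tb N V i v'})"

definition action_profile ::
  "nat \<Rightarrow> 'c list \<Rightarrow> 'v set \<Rightarrow> ('v \<Rightarrow> 'c list) \<Rightarrow> ('v \<Rightarrow> 'c list set)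
     \<Rightarrow> ('v \<Rightarrow> 'c list) \<Rightarrow> bool" where
  "action_profile k tb N V A s \<longleftrightarrow>
     (\<forall>i \<in> players k tb N V. s i \<in> A i) \<and>
     (\<forall>i. i \<notin> players k tb N V \<longrightarrow> s i = V i)"

definition pure_nash ::
  "nat \<Rightarrow> 'c list \<Rightarrow> 'v set \<Rightarrow> ('v \<Rightarrow> 'c list) \<Rightarrow> ('v \<Rightarrow> 'c list set)
     \<Rightarrow> ('v \<Rightarrow> 'c list) \<Rightarrow> bool" where
  "pure_nash k tb N V A s \<longleftrightarrow>
     action_profile k tb N V A s \<and>
     (\<forall>i \<in> players k tb N V. \<forall>a \<in> A i.
        \<not> prefers (V i) (kapp k tb N (s(i := a))) (kapp k tb N s))"

definition minimal_type1 ::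
  "nat \<Rightarrow> 'c list \<Rightarrow> 'v set \<Rightarrow> ('v \<Rightarrow> 'c list) \<Rightarrow> 'v \<Rightarrow> 'c list \<Rightarrow> bool" where
  "minimal_type1 k tb N V i v' \<longleftrightarrow>
     (let w = kapp k tb N V; x = kapp k tb N (V(i := v')) in
      gs_manipulation k tb N V i v' \<and>
      w \<notin> top k (V i) \<and> x \<notin> top k (V i) \<and>
      top k v' = insert x (top k (V i) - {V i ! (k - 1)}) \<and>
      v' ! (k - 1) = x)"

definition minimal_type2 ::
  "nat \<Rightarrow> 'c list \<Rightarrow> 'v set \<Rightarrow> ('v \<Rightarrow> 'c list) \<Rightarrow> 'v \<Rightarrow> 'c list \<Rightarrow> bool" where
  "minimal_type2 k tb N V i v' \<longleftrightarrow>
     (let w = kapp k tb N V; x = kapp k tb N (V(i := v'));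
          l = card (top k (V i) - top k v') in
      gs_manipulation k tb N V i v' \<and>
      w \<in> top k (V i) \<and> x \<in> top k (V i) \<and>
      (\<forall>v''. gs_manipulation k tb N V i v'' \<longrightarrow> l \<le> card (top k (V i) - top k v'')) \<and>
      top k v' - top k (V i) = set (take l (drop k (V i))))"

definition minimal_manipulation ::
  "nat \<Rightarrow> 'c list \<Rightarrow> 'v set \<Rightarrow> ('v \<Rightarrow> 'c list) \<Rightarrow> 'v \<Rightarrow> 'c list \<Rightarrow> bool" where
  "minimal_manipulation k tb N V i v' \<longleftrightarrow>
     minimal_type1 k tb N V i v' \<or> minimal_type2 k tb N V i v'"

definition minimality_assumption ::
  "nat \<Rightarrow> 'c list \<Rightarrow> 'v set \<Rightarrow> ('v \<Rightarrow> 'c list) \<Rightarrow> ('v \<Rightarrow> 'c list set) \<Rightarrow> bool" where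
  "minimality_assumption k tb N V A \<longleftrightarrow>
     (\<forall>j \<in> players k tb N V. \<forall>a \<in> A j.
        gs_manipulation k tb N V j a \<longrightarrow> minimal_manipulation k tb N V j a)"

end

theory Submission
  imports Defs
begin

definition pos :: "'a list \<Rightarrow> 'a \<Rightarrow> nat" where
  "pos v c = length (takeWhile (\<lambda>x. x \<noteq> c) v)"

lemma pos_lt: "c \<in> set v \<Longrightarrow> pos v c < length v"
  unfolding pos_def by (induction v) auto

lemma nth_pos: "c \<in> set v \<Longrightarrow> v ! pos v c = c"
  unfolding pos_def using pos_lt[of c v] unfolding pos_def
  by (metis (mono_tags) nth_length_takeWhile)

lemma pos_nth: "distinct v \<Longrightarrow> i < length v \<Longrightarrow> pos v (v ! i) = i"
  by (metis distinct_Ex1 nth_mem nth_pos pos_lt)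

lemma pos_inj: "c \<in> set v \<Longrightarrow> d \<in> set v \<Longrightarrow> pos v c = pos v d \<Longrightarrow> c = d"
  by (metis nth_pos)

lemma prefers_pos: "distinct v \<Longrightarrow> prefers v c d \<longleftrightarrow> c \<in> set v \<and> d \<in> set v \<and> pos v c < pos v d"
  unfolding prefers_def
  by (metis nth_mem nth_pos order.strict_trans pos_lt pos_nth)

lemma prefers_irrefl: "distinct v \<Longrightarrow> \<not> prefers v c c"
  by (simp add: prefers_pos)

lemma prefers_asym: "distinct v \<Longrightarrow> prefers v c d \<Longrightarrow> \<not> prefers v d c"
  by (simp add: prefers_pos)

lemma top_pos: "distinct v \<Longrightarrow> c \<in> top k v \<longleftrightarrow> c \<in> set v \<and> pos v c < k"
  unfolding top_def
  by (metis in_set_conv_nth length_take min_less_iff_conj nth_pos nth_take pos_lt pos_nth)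

lemma prefers_top: "distinct v \<Longrightarrow> c \<in> top k v \<Longrightarrow> d \<in> set v \<Longrightarrow> d \<notin> top k v \<Longrightarrow> prefers v c d"
  by (auto simp: prefers_pos top_pos)

lemma top_subset: "top k v \<subseteq> set v"
  unfolding top_def by (rule set_take_subset)

definition st :: "'c list \<Rightarrow> 'v set \<Rightarrow> ('v \<Rightarrow> 'c list) \<Rightarrow> 'c \<Rightarrow> int" where
  "st tb N P c = int (length tb) * int (score 3 N P c) + int (length tb - pos tb c)"

lemma hd_filter_first:
  "filter P xs \<noteq> [] \<Longrightarrow> hd (filter P xs) \<in> set xs \<and> P (hd (filter P xs)) \<and>
     (\<forall>d\<in>set xs. P d \<longrightarrow> pos xs (hd (filter P xs)) \<le> pos xs d)"
proof (induction xs)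
  case Nil then show ?case by simp
next
  case (Cons a xs)
  show ?case
  proof (cases "P a")
    case True then show ?thesis by (simp add: pos_def)
  next
    case False
    then have "filter P xs \<noteq> []" using Cons.prems by simp
    with Cons.IH False show ?thesis by (auto simp: pos_def)
  qed
qed

lemma st_inj:
  assumes "c \<in> set tb" "d \<in> set tb" "c \<noteq> d"
  shows "st tb N P c \<noteq> st tb N P d"
proof
  assume h: "st tb N P c = st tb N P d"
  have pc: "pos tb c < length tb" "pos tb d < length tb" using pos_lt[OF assms(1)] pos_lt[OF assms(2)] by auto
  have pne: "pos tb c \<noteq> pos tb d" using assms pos_inj by metis
  let ?M = "int (length tb)"
  have "?M * (int (score 3 N P c) - int (score 3 N P d)) = int (length tb - pos tb d) - int (length tb - pos tb c)"
    using h unfolding st_def by (simp add: algebra_simps)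
  moreover have "\<bar>int (length tb - pos tb d) - int (length tb - pos tb c)\<bar> < ?M" using pc by auto
  ultimately have lt: "\<bar>?M * (int (score 3 N P c) - int (score 3 N P d))\<bar> < ?M" by simp
  have "int (score 3 N P c) - int (score 3 N P d) = 0"
  proof (rule ccontr)
    let ?k = "int (score 3 N P c) - int (score 3 N P d)"
    assume "?k \<noteq> 0"
    then have "1 \<le> \<bar>?k\<bar>" by linarith
    then have "?M * 1 \<le> ?M * \<bar>?k\<bar>" by (rule mult_left_mono) simp
    then show False using lt by (simp add: abs_mult)
  qed
  then have "int (length tb - pos tb d) = int (length tb - pos tb c)" using h unfolding st_def by simp
  then show False using pc pne by simp
qed

lemma kapp_max:
  assumes "distinct tb" "tb \<noteq> []"
  shows "kapp 3 tb N P \<in> set tb \<and> (\<forall>d\<in>set tb. d \<noteq> kapp 3 tb N P \<longrightarrow> st tb N P d < st tb N P (kapp 3 tb N P))"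
proof -
  let ?s = "score 3 N P"
  define m where "m = Max (?s ` set tb)"
  have fin: "finite (?s ` set tb)" and ne: "?s ` set tb \<noteq> {}" using assms by auto
  obtain c0 where c0: "c0 \<in> set tb" "?s c0 = m" using Max_in[OF fin ne] unfolding m_def by auto
  have fne: "filter (\<lambda>x. ?s x = m) tb \<noteq> []" using c0 by (auto simp: filter_empty_conv)
  define e where "e = hd (filter (\<lambda>x. ?s x = m) tb)"
  have ke: "kapp 3 tb N P = e" unfolding kapp_def e_def m_def by simp
  have e: "e \<in> set tb" "?s e = m" "\<forall>d\<in>set tb. ?s d = m \<longrightarrow> pos tb e \<le> pos tb d"
    using hd_filter_first[OF fne] unfolding e_def by auto
  have le: "\<forall>d\<in>set tb. ?s d \<le> m" unfolding m_def using fin by auto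
  have pe: "pos tb e < length tb" using pos_lt[OF e(1)] by auto
  have "st tb N P d < st tb N P e" if d: "d \<in> set tb" "d \<noteq> e" for d
  proof (cases "?s d = m")
    case True
    then have "pos tb e \<le> pos tb d" using e d by auto
    moreover have "pos tb e \<noteq> pos tb d" using d e pos_inj by metis
    ultimately have "pos tb e < pos tb d" by simp
    moreover have "pos tb d < length tb" using pos_lt[OF d(1)] by auto
    ultimately show ?thesis using True e unfolding st_def by simp
  next
    case False
    then have "?s d + 1 \<le> m" using le d by fastforce
    then have "int (?s d) + 1 \<le> int m" by linarith
    then have "int (length tb) * int (?s d) + int (length tb) \<le> int (length tb) * int m"
      by (metis distrib_left mult.right_neutral mult_left_mono of_nat_0_le_iff)
    moreover have "int (length tb - pos tb d) \<le> int (length tb)" by simp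
    moreover have "int (length tb - pos tb e) > 0" using pe by simp
    ultimately show ?thesis using e unfolding st_def by simp
  qed
  then show ?thesis using ke e by auto
qed

lemma kapp_unique:
  assumes "distinct tb" "tb \<noteq> []" "c \<in> set tb" "\<forall>d\<in>set tb. d \<noteq> c \<longrightarrow> st tb N P d < st tb N P c"
  shows "kapp 3 tb N P = c"
  using kapp_max[OF assms(1,2), of N P] assms(3,4) by fastforce

lemma score_cong:
  assumes "\<forall>q\<in>N. top 3 (P q) = top 3 (Q q)"
  shows "score 3 N P = score 3 N Q"
proof -
  have "{i \<in> N. x \<in> top 3 (P i)} = {i \<in> N. x \<in> top 3 (Q i)}" for x using assms by auto
  then show ?thesis unfolding score_def by auto
qed

lemma kapp_cong:
  assumes "\<forall>q\<in>N. top 3 (P q) = top 3 (Q q)"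
  shows "kapp 3 tb N P = kapp 3 tb N Q"
  unfolding kapp_def using score_cong[OF assms] by simp

lemma st_cong:
  assumes "\<forall>q\<in>N. top 3 (P q) = top 3 (Q q)"
  shows "st tb N P = st tb N Q"
  unfolding st_def using score_cong[OF assms] by simp

lemma score_upd:
  assumes "finite N" "q \<in> N"
  shows "int (score 3 N (P(q:=v)) c) = int (score 3 N P c) - of_bool (c \<in> top 3 (P q)) + of_bool (c \<in> top 3 v)"
proof -
  let ?S = "{i \<in> N. c \<in> top 3 (P i)}"
  let ?S' = "{i \<in> N. c \<in> top 3 ((P(q:=v)) i)}"
  have f: "finite (?S - {q})" using assms by auto
  have q: "q \<notin> ?S - {q}" by simp
  have S: "?S = (?S - {q}) \<union> (if c \<in> top 3 (P q) then {q} else {})" using assms by auto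
  have S': "?S' = (?S - {q}) \<union> (if c \<in> top 3 v then {q} else {})" using assms by auto
  have c1: "card ?S = card (?S - {q}) + of_bool (c \<in> top 3 (P q))"
  proof (cases "c \<in> top 3 (P q)")
    case True
    then have "q \<in> ?S" using assms by simp
    then show ?thesis using True card_Suc_Diff1[of ?S q] assms by simp
  next
    case False
    then have "?S - {q} = ?S" by auto
    then show ?thesis using False by simp
  qed
  have c2: "card ?S' = card (?S - {q}) + of_bool (c \<in> top 3 v)"
  proof (cases "c \<in> top 3 v")
    case True
    then have e: "?S' = insert q (?S - {q})" using assms by auto
    have "card ?S' = Suc (card (?S - {q}))" unfolding e by (rule card_insert_disjoint[OF f q])
    then show ?thesis using True by simp
  next
    case False
    then have "?S' = ?S - {q}" using assms by auto
    then show ?thesis using False by simp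
  qed
  show ?thesis unfolding score_def using c1 c2 by simp
qed

lemma st_upd:
  assumes "finite N" "q \<in> N"
  shows "st tb N (P(q:=v)) c = st tb N P c + int (length tb) * (of_bool (c \<in> top 3 v) - of_bool (c \<in> top 3 (P q)))"
  unfolding st_def score_upd[OF assms, of P v c] by (simp add: algebra_simps)

definition prof :: "('v \<Rightarrow> 'c list) \<Rightarrow> ('v \<Rightarrow> 'c list) \<Rightarrow> 'v set \<Rightarrow> 'v \<Rightarrow> 'c list" where
  "prof a V D = (\<lambda>q. if q \<in> D then a q else V q)"

lemma prof_insert: "prof a V (insert p D) = (prof a V D)(p := a p)"
  unfolding prof_def by auto

lemma prof_remove: "prof a V (D - {p}) = (prof a V D)(p := V p)"
  unfolding prof_def by auto

lemma prof_empty: "prof a V {} = V" unfolding prof_def by auto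

lemma score_D_eq:
  assumes "\<forall>q\<in>D. c \<in> top 3 (a q) \<longleftrightarrow> c \<in> top 3 (V q)"
  shows "score 3 N (prof a V D) c = score 3 N V c"
proof -
  have "{i \<in> N. c \<in> top 3 (prof a V D i)} = {i \<in> N. c \<in> top 3 (V i)}"
    using assms unfolding prof_def by auto
  then show ?thesis unfolding score_def by simp
qed

lemma score_D_ge:
  assumes "finite N" "\<forall>q\<in>D. c \<in> top 3 (V q) \<longrightarrow> c \<in> top 3 (a q)"
  shows "score 3 N V c \<le> score 3 N (prof a V D) c"
    and "q \<in> D \<Longrightarrow> q \<in> N \<Longrightarrow> c \<in> top 3 (a q) \<Longrightarrow> c \<notin> top 3 (V q) \<Longrightarrow> score 3 N V c < score 3 N (prof a V D) c"
proof -
  have sub: "{i \<in> N. c \<in> top 3 (V i)} \<subseteq> {i \<in> N. c \<in> top 3 (prof a V D i)}"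
    using assms unfolding prof_def by auto
  have fin: "finite {i \<in> N. c \<in> top 3 (prof a V D i)}" using assms(1) by simp
  show "score 3 N V c \<le> score 3 N (prof a V D) c" unfolding score_def
    using card_mono[OF fin sub] .
  assume q: "q \<in> D" "q \<in> N" "c \<in> top 3 (a q)" "c \<notin> top 3 (V q)"
  then have "q \<in> {i \<in> N. c \<in> top 3 (prof a V D i)} - {i \<in> N. c \<in> top 3 (V i)}"
    unfolding prof_def by auto
  then have "{i \<in> N. c \<in> top 3 (V i)} \<subset> {i \<in> N. c \<in> top 3 (prof a V D i)}" using sub by blast
  then show "score 3 N V c < score 3 N (prof a V D) c" unfolding score_def
    using psubset_card_mono[OF fin] by blast
qed

lemma score_D_le:
  assumes "finite N" "\<forall>q\<in>D. c \<in> top 3 (a q) \<longrightarrow> c \<in> top 3 (V q)"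
  shows "score 3 N (prof a V D) c \<le> score 3 N V c"
    and "q \<in> D \<Longrightarrow> q \<in> N \<Longrightarrow> c \<notin> top 3 (a q) \<Longrightarrow> c \<in> top 3 (V q) \<Longrightarrow> score 3 N (prof a V D) c < score 3 N V c"
proof -
  have sub: "{i \<in> N. c \<in> top 3 (prof a V D i)} \<subseteq> {i \<in> N. c \<in> top 3 (V i)}"
    using assms unfolding prof_def by auto
  have fin: "finite {i \<in> N. c \<in> top 3 (V i)}" using assms(1) by simp
  show "score 3 N (prof a V D) c \<le> score 3 N V c" unfolding score_def
    using card_mono[OF fin sub] .
  assume q: "q \<in> D" "q \<in> N" "c \<notin> top 3 (a q)" "c \<in> top 3 (V q)"
  then have "q \<in> {i \<in> N. c \<in> top 3 (V i)} - {i \<in> N. c \<in> top 3 (prof a V D i)}"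
    unfolding prof_def by auto
  then have "{i \<in> N. c \<in> top 3 (prof a V D i)} \<subset> {i \<in> N. c \<in> top 3 (V i)}" using sub by blast
  then show "score 3 N (prof a V D) c < score 3 N V c" unfolding score_def
    using psubset_card_mono[OF fin] by blast
qed

locale G =
  fixes tb :: "'c list" and N :: "'v set" and V :: "'v \<Rightarrow> 'c list"
  assumes dist: "distinct tb" and tbne: "tb \<noteq> []" and finN: "finite N"
    and votes: "\<forall>i\<in>N. is_vote (set tb) (V i)"
begin

abbreviation "M \<equiv> int (length tb)"
abbreviation "S \<equiv> st tb N"
abbreviation "win \<equiv> kapp 3 tb N"
abbreviation "w \<equiv> kapp 3 tb N V"

lemma Mpos: "M > 0" using tbne by simp

lemma win_max: "win P \<in> set tb" "d \<in> set tb \<Longrightarrow> d \<noteq> win P \<Longrightarrow> S P d < S P (win P)"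
  using kapp_max[OF dist tbne, of N P] by auto

lemma win_eq: "c \<in> set tb \<Longrightarrow> (\<And>d. d \<in> set tb \<Longrightarrow> d \<noteq> c \<Longrightarrow> S P d < S P c) \<Longrightarrow> win P = c"
  using kapp_unique[OF dist tbne] by blast

lemma S_inj: "c \<in> set tb \<Longrightarrow> d \<in> set tb \<Longrightarrow> c \<noteq> d \<Longrightarrow> S P c \<noteq> S P d"
  by (rule st_inj)

lemma vote_len: "is_vote (set tb) v \<Longrightarrow> length v = length tb"
proof -
  assume "is_vote (set tb) v"
  then have "distinct v" "set v = set tb" unfolding is_vote_def by auto
  then show ?thesis using distinct_card[OF dist] distinct_card[of v] by simp
qed

lemma vote_top_sub: "is_vote (set tb) v \<Longrightarrow> top 3 v \<subseteq> set tb"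
  unfolding is_vote_def using top_subset by metis

lemma vote_top_card: "is_vote (set tb) v \<Longrightarrow> card (top 3 v) = min 3 (length tb)"
  unfolding top_def using vote_len[of v] unfolding is_vote_def
  by (simp add: distinct_card)

lemma vote_top_all: "is_vote (set tb) v \<Longrightarrow> length tb \<le> 3 \<Longrightarrow> top 3 v = set tb"
  unfolding top_def using vote_len[of v] unfolding is_vote_def by simp

lemma Vi: "i \<in> N \<Longrightarrow> distinct (V i) \<and> set (V i) = set tb \<and> length (V i) = length tb"
  using votes vote_len unfolding is_vote_def by blast

lemma S_upd: "i \<in> N \<Longrightarrow> S (P(i:=v)) c = S P c + M * (of_bool (c \<in> top 3 v) - of_bool (c \<in> top 3 (P i)))"
  by (rule st_upd[OF finN])

lemma gs_basic:
  assumes "gs_manipulation 3 tb N V i a"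
  shows "i \<in> N" "is_vote (set tb) a" "prefers (V i) (win (V(i:=a))) w"
    "win (V(i:=a)) \<noteq> w"
    "\<And>v. is_vote (set tb) v \<Longrightarrow> win (V(i:=v)) = win (V(i:=a)) \<or> prefers (V i) (win (V(i:=a))) (win (V(i:=v)))"
proof -
  show i: "i \<in> N" and "is_vote (set tb) a" and p: "prefers (V i) (win (V(i:=a))) w"
    using assms unfolding gs_manipulation_def by auto
  show "win (V(i:=a)) \<noteq> w" using p prefers_irrefl Vi[OF i] by metis
  show "\<And>v. is_vote (set tb) v \<Longrightarrow> win (V(i:=v)) = win (V(i:=a)) \<or> prefers (V i) (win (V(i:=a))) (win (V(i:=v)))"
    using assms unfolding gs_manipulation_def by auto
qed

lemma gs_same:
  assumes "gs_manipulation 3 tb N V i a" "gs_manipulation 3 tb N V i b"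
  shows "win (V(i:=a)) = win (V(i:=b))"
proof -
  have i: "i \<in> N" using gs_basic[OF assms(1)] by simp
  have d: "distinct (V i)" using Vi[OF i] by simp
  have 1: "win (V(i:=b)) = win (V(i:=a)) \<or> prefers (V i) (win (V(i:=a))) (win (V(i:=b)))"
    using gs_basic(5)[OF assms(1) gs_basic(2)[OF assms(2)]] .
  have 2: "win (V(i:=a)) = win (V(i:=b)) \<or> prefers (V i) (win (V(i:=b))) (win (V(i:=a)))"
    using gs_basic(5)[OF assms(2) gs_basic(2)[OF assms(1)]] .
  show ?thesis using 1 2 prefers_asym[OF d] by metis
qed

lemma gs_same_win:
  assumes "gs_manipulation 3 tb N V i a" "is_vote (set tb) b" "win (V(i:=b)) = win (V(i:=a))"
  shows "gs_manipulation 3 tb N V i b"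
  using assms unfolding gs_manipulation_def by auto


lemma type1:
  assumes "minimal_type1 3 tb N V i a"
  defines "x \<equiv> win (V(i:=a))" and "d \<equiv> V i ! 2"
  shows "gs_manipulation 3 tb N V i a" "i \<in> N" "w \<notin> top 3 (V i)" "x \<notin> top 3 (V i)" "x \<in> set tb"
    "d \<in> top 3 (V i)" "d \<in> set tb" "d \<noteq> x" "d \<noteq> w"
    "top 3 a = insert x (top 3 (V i) - {d})"
    "\<And>c. S (V(i:=a)) c = S V c + M * (of_bool (c = x) - of_bool (c = d))"
    "\<And>c. c \<in> set tb \<Longrightarrow> c \<noteq> x \<Longrightarrow> S V c - M * of_bool (c = d) < S V x + M"
proof -
  have gs: "gs_manipulation 3 tb N V i a" and wT: "w \<notin> top 3 (V i)" and xT: "x \<notin> top 3 (V i)"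
    and Ta: "top 3 a = insert x (top 3 (V i) - {V i ! 2})"
    using assms unfolding minimal_type1_def Let_def by auto
  show "gs_manipulation 3 tb N V i a" "w \<notin> top 3 (V i)" "x \<notin> top 3 (V i)" by fact+
  show i: "i \<in> N" using gs_basic(1)[OF gs] .
  have vi: "distinct (V i)" "set (V i) = set tb" "length (V i) = length tb" using Vi[OF i] by auto
  show xC: "x \<in> set tb" unfolding x_def by (rule win_max)
  have wC: "w \<in> set tb" by (rule win_max)
  have len: "length tb > 3"
  proof (rule ccontr)
    assume "\<not> length tb > 3"
    moreover have "is_vote (set tb) (V i)" using votes i by blast
    ultimately have "top 3 (V i) = set tb" using vote_top_all by simp
    then show False using wT wC by simp
  qed
  have l2: "2 < length (take 3 (V i))" using len vi by simp
  have "take 3 (V i) ! 2 = V i ! 2" by simp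
  then show dT: "d \<in> top 3 (V i)" unfolding d_def top_def using nth_mem[OF l2] by metis
  show "d \<in> set tb" using dT top_subset[of 3 "V i"] vi(2) by blast
  show dx: "d \<noteq> x" using dT xT by blast
  show "d \<noteq> w" using dT wT by blast
  show Ta': "top 3 a = insert x (top 3 (V i) - {d})" using Ta d_def by simp
  have gs1: "x \<noteq> w" using gs_basic(4)[OF gs] x_def by simp
  show Sa: "\<And>c. S (V(i:=a)) c = S V c + M * (of_bool (c = x) - of_bool (c = d))"
  proof -
    fix c
    have "of_bool (c \<in> top 3 a) - of_bool (c \<in> top 3 (V i)) = (of_bool (c = x) - of_bool (c = d) :: int)"
      using Ta' xT dT by (cases "c = x"; cases "c = d") auto
    then show "S (V(i:=a)) c = S V c + M * (of_bool (c = x) - of_bool (c = d))"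
      using S_upd[OF i, of V a c] by simp
  qed
  fix c assume c: "c \<in> set tb" "c \<noteq> x"
  have "S (V(i:=a)) c < S (V(i:=a)) x" using win_max(2)[of c "V(i:=a)"] c unfolding x_def by simp
  then show "S V c - M * of_bool (c = d) < S V x + M" using Sa[of c] Sa[of x] dx c(2) by simp
qed


lemma Vvote: "i \<in> N \<Longrightarrow> is_vote (set tb) (V i)" using votes by blast

lemma card_diff_eq:
  assumes "finite A" "finite B" "card A = card B"
  shows "card (A - B) = card (B - A)"
proof -
  have "card (A - B) = card A - card (A \<inter> B)" by (rule card_Diff_subset_Int) (use assms in simp)
  moreover have "card (B - A) = card B - card (B \<inter> A)" by (rule card_Diff_subset_Int) (use assms in simp)
  ultimately show ?thesis using assms(3) by (simp add: Int_commute)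
qed

lemma type2:
  assumes "minimal_type2 3 tb N V i a"
  defines "x \<equiv> win (V(i:=a))" and "T \<equiv> top 3 (V i)"
  obtains (L1) "gs_manipulation 3 tb N V i a" "i \<in> N" "w \<in> T" "x \<in> T" "x \<noteq> w" "x \<in> set tb"
      "card (T - top 3 a) = 1" "top 3 a = insert (V i ! 3) (T - {w})"
      "V i ! 3 \<in> set tb" "V i ! 3 \<notin> T" "S V (V i ! 3) + M < S V x"
      "\<forall>c\<in>set tb. c \<noteq> w \<longrightarrow> c \<noteq> x \<longrightarrow> S V c < S V x" "S V w - M < S V x"
      "\<forall>c. S (V(i:=a)) c = S V c + M * (of_bool (c = V i ! 3) - of_bool (c = w))"
  | (L2) t Ad where "gs_manipulation 3 tb N V i a" "i \<in> N" "w \<in> T" "x \<in> T" "x \<noteq> w" "x \<in> set tb"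
      "card (T - top 3 a) = 2" "T = {w, x, t}" "t \<noteq> w" "t \<noteq> x" "t \<in> set tb"
      "Ad = set (take 2 (drop 3 (V i)))" "Ad \<subseteq> set tb" "Ad \<inter> T = {}" "top 3 a = insert x Ad"
      "\<forall>c\<in>Ad. S V c + M < S V x" "S V x < S V t"
      "\<forall>c\<in>set tb. c \<noteq> w \<longrightarrow> c \<noteq> t \<longrightarrow> S V c < S V t"
      "\<forall>c\<in>set tb. c \<noteq> w \<longrightarrow> c \<noteq> t \<longrightarrow> c \<noteq> x \<longrightarrow> S V c < S V x"
      "S V w - M < S V x" "S V t - M < S V x"
      "\<forall>c. S (V(i:=a)) c = S V c + M * (of_bool (c \<in> Ad) - of_bool (c = w \<or> c = t))"
proof -
  define Ta where "Ta = top 3 a"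
  define l where "l = card (T - Ta)"
  have gs: "gs_manipulation 3 tb N V i a" and wT: "w \<in> T" and xT: "x \<in> T"
    and minl: "\<And>v. gs_manipulation 3 tb N V i v \<Longrightarrow> l \<le> card (T - top 3 v)"
    and addset: "Ta - T = set (take l (drop 3 (V i)))"
    using assms unfolding minimal_type2_def Let_def l_def Ta_def by auto
  have i: "i \<in> N" using gs_basic(1)[OF gs] .
  have vi: "distinct (V i)" "set (V i) = set tb" "length (V i) = length tb" using Vi[OF i] by auto
  have av: "is_vote (set tb) a" using gs_basic(2)[OF gs] .
  have xw: "x \<noteq> w" using gs_basic(4)[OF gs] x_def by simp
  have xC: "x \<in> set tb" unfolding x_def by (rule win_max)
  have wC: "w \<in> set tb" by (rule win_max)
  have TC: "T \<subseteq> set tb" unfolding T_def using vote_top_sub[OF Vvote[OF i]] .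
  have TaC: "Ta \<subseteq> set tb" unfolding Ta_def using vote_top_sub[OF av] .
  have Sa: "S (V(i:=a)) c = S V c + M * (of_bool (c \<in> Ta) - of_bool (c \<in> T))" for c
    using S_upd[OF i, of V a c] unfolding Ta_def T_def by simp
  have xwin: "S (V(i:=a)) c < S (V(i:=a)) x" if "c \<in> set tb" "c \<noteq> x" for c
    using win_max(2)[of c "V(i:=a)"] that unfolding x_def by simp
  have wwin: "S V c < S V w" if "c \<in> set tb" "c \<noteq> w" for c
    using win_max(2)[of c V] that by simp
  have wTa: "w \<notin> Ta"
  proof
    assume "w \<in> Ta"
    then have "S (V(i:=a)) w = S V w" using Sa[of w] wT by simp
    moreover have "S (V(i:=a)) x \<le> S V x" using Sa[of x] xT Mpos by (cases "x \<in> Ta") auto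
    moreover have "S V x < S V w" using wwin xC xw by simp
    ultimately show False using xwin[OF wC xw[symmetric]] by simp
  qed
  have xTa: "x \<in> Ta"
  proof (rule ccontr)
    assume "x \<notin> Ta"
    then have "S (V(i:=a)) x = S V x - M" using Sa[of x] xT by simp
    moreover have "S (V(i:=a)) w = S V w - M" using Sa[of w] wT wTa by simp
    moreover have "S V x < S V w" using wwin xC xw by simp
    ultimately show False using xwin[OF wC xw[symmetric]] by simp
  qed
  have len: "length tb > 3"
  proof (rule ccontr)
    assume "\<not> length tb > 3"
    then have "Ta = set tb" unfolding Ta_def using vote_top_all[OF av] by simp
    then show False using wTa wC by simp
  qed
  have cT: "card T = 3" unfolding T_def using vote_top_card[OF Vvote[OF i]] len by simp
  have cTa: "card Ta = 3" unfolding Ta_def using vote_top_card[OF av] len by simp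
  have fT: "finite T" "finite Ta" unfolding T_def Ta_def top_def by auto
  have ceq: "card (Ta - T) = l" unfolding l_def using card_diff_eq[OF fT cT[folded cTa]] by simp
  have l1: "l \<ge> 1" unfolding l_def using wT wTa fT
    by (metis DiffI One_nat_def Suc_leI card_gt_0_iff empty_iff finite_Diff)
  have sub: "T - Ta \<subseteq> T - {x}" using xTa by auto
  have cTx: "card (T - {x}) = 2" using cT xT fT by simp
  have l2: "l \<le> 2" unfolding l_def using card_mono[OF _ sub] fT cTx by simp
  have decomp: "Ta = (T \<inter> Ta) \<union> (Ta - T)" by auto
  show thesis
  proof (cases "l = 1")
    case True
    then obtain u where u: "T - Ta = {u}" unfolding l_def using card_1_singletonE by blast
    then have TTa: "T - Ta = {w}" using wT wTa by auto
    have d3: "drop 3 (V i) = V i ! 3 # drop 4 (V i)" using len vi Cons_nth_drop_Suc[of 3 "V i"] by simp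
    have A1: "Ta - T = {V i ! 3}" using addset True d3 by simp
    have y: "V i ! 3 \<in> set tb" "V i ! 3 \<notin> T" using A1 TaC by auto
    have Ta1: "Ta = insert (V i ! 3) (T - {w})" using TTa A1 decomp by auto
    have Sa1: "S (V(i:=a)) c = S V c + M * (of_bool (c = V i ! 3) - of_bool (c = w))" for c
      using Sa[of c] Ta1 y wT by (cases "c = V i ! 3"; cases "c = w"; cases "c \<in> T") auto
    have yx: "V i ! 3 \<noteq> x" "V i ! 3 \<noteq> w" using y xT wT by auto
    have Sax: "S (V(i:=a)) x = S V x" using Sa1[of x] yx xw by simp
    have f1: "S V (V i ! 3) + M < S V x" using xwin[OF y(1) yx(1)] Sa1[of "V i ! 3"] Sax yx by simp
    have f2: "S V w - M < S V x" using xwin[OF wC xw[symmetric]] Sa1[of w] Sax yx by simp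
    have f3: "\<forall>c\<in>set tb. c \<noteq> w \<longrightarrow> c \<noteq> x \<longrightarrow> S V c < S V x"
    proof (intro ballI impI)
      fix c assume c: "c \<in> set tb" "c \<noteq> w" "c \<noteq> x"
      show "S V c < S V x"
      proof (cases "c = V i ! 3")
        case True then show ?thesis using f1 Mpos by simp
      next
        case False then show ?thesis using xwin[OF c(1) c(3)] Sa1[of c] Sax c by simp
      qed
    qed
    show thesis
      apply (rule L1)
      using gs i wT xT xw xC True Ta1 y f1 f2 f3 Sa1 unfolding l_def Ta_def by auto
  next
    case False
    then have l2': "l = 2" using l1 l2 by simp
    have TTa: "T - Ta = T - {x}" using card_subset_eq[OF _ sub] fT cTx l2' unfolding l_def by simp
    obtain t where t: "t \<in> T" "t \<noteq> x" "t \<noteq> w"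
    proof -
      have "card (T - {x} - {w}) = 1" using cTx wT xw fT by simp
      then obtain t where "T - {x} - {w} = {t}" using card_1_singletonE by blast
      then show thesis using that by auto
    qed
    have T3: "T = {w, x, t}"
    proof -
      have "{w, x, t} \<subseteq> T" using t wT xT by auto
      moreover have "card {w, x, t} = 3" using t xw by auto
      ultimately show ?thesis using card_subset_eq[OF fT(1)] cT by metis
    qed
    define Ad where "Ad = Ta - T"
    have Ad: "Ad = set (take 2 (drop 3 (V i)))" using addset l2' Ad_def by simp
    have cAd: "card Ad = 2" using ceq l2' Ad_def by simp
    have AdC: "Ad \<subseteq> set tb" "Ad \<inter> T = {}" using TaC Ad_def by auto
    have Ta2: "Ta = insert x Ad" using TTa xTa decomp Ad_def by auto
    have Sa2: "S (V(i:=a)) c = S V c + M * (of_bool (c \<in> Ad) - of_bool (c = w \<or> c = t))" for c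
    proof -
      have "c \<in> Ta \<longleftrightarrow> c = x \<or> c \<in> Ad" using Ta2 by auto
      moreover have "c \<in> T \<longleftrightarrow> c = w \<or> c = x \<or> c = t" using T3 by auto
      moreover have "x \<notin> Ad" using AdC xT by auto
      ultimately show ?thesis using Sa[of c] t xw by (cases "c = x"; cases "c \<in> Ad"; cases "c = w \<or> c = t") auto
    qed
    have xAd: "x \<notin> Ad" "w \<notin> Ad" "t \<notin> Ad" using AdC xT wT t by auto
    have Sax: "S (V(i:=a)) x = S V x" using Sa2[of x] xAd xw t by auto
    have g1: "\<forall>c\<in>Ad. S V c + M < S V x"
    proof
      fix c assume c: "c \<in> Ad"
      then have "c \<noteq> x" "c \<noteq> w" "c \<noteq> t" "c \<in> set tb" using xAd AdC by auto
      then show "S V c + M < S V x" using xwin[of c] Sa2[of c] Sax c by simp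
    qed
    have g2: "S V w - M < S V x" using xwin[OF wC xw[symmetric]] Sa2[of w] Sax xAd by simp
    have tC: "t \<in> set tb" using t TC by auto
    have g3: "S V t - M < S V x" using xwin[OF tC t(2)] Sa2[of t] Sax xAd t by simp
    have g4: "\<forall>c\<in>set tb. c \<noteq> w \<longrightarrow> c \<noteq> t \<longrightarrow> c \<noteq> x \<longrightarrow> S V c < S V x"
    proof (intro ballI impI)
      fix c assume c: "c \<in> set tb" "c \<noteq> w" "c \<noteq> t" "c \<noteq> x"
      show "S V c < S V x"
      proof (cases "c \<in> Ad")
        case True then show ?thesis using g1 Mpos by fastforce
      next
        case False then show ?thesis using xwin[OF c(1) c(4)] Sa2[of c] Sax c by simp
      qed
    qed
    have len5: "length (V i) \<ge> 5"
    proof (rule ccontr)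
      assume "\<not> length (V i) \<ge> 5"
      then have "length (take 2 (drop 3 (V i))) \<le> 1" by simp
      then have "card Ad \<le> 1" using Ad card_length le_trans by metis
      then show False using cAd by simp
    qed
    define y where "y = V i ! 3"
    have yAd: "y \<in> Ad"
    proof -
      have "take 2 (drop 3 (V i)) ! 0 = y" using len5 unfolding y_def by simp
      moreover have "0 < length (take 2 (drop 3 (V i)))" using len5 by simp
      ultimately show ?thesis using Ad nth_mem by metis
    qed
    have yC: "y \<in> set tb" "y \<noteq> x" "y \<noteq> t" "y \<noteq> w" using yAd AdC xAd by auto
    have xt: "S V x < S V t"
    proof (rule ccontr)
      assume "\<not> S V x < S V t"
      moreover have "S V x \<noteq> S V t" using S_inj[OF xC tC] t by metis
      ultimately have tx: "S V t < S V x" by simp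
      define a1 where "a1 = [x, t, y] @ filter (\<lambda>c. c \<notin> {x, t, y}) tb"
      have a1v: "is_vote (set tb) a1" unfolding is_vote_def a1_def
        using dist xC tC yC t by auto
      have ta1: "top 3 a1 = {x, t, y}" unfolding top_def a1_def by auto
      have Sa1: "S (V(i:=a1)) c = S V c + M * (of_bool (c = y) - of_bool (c = w))" for c
      proof -
        have "of_bool (c \<in> {x, t, y}) - of_bool (c \<in> T) = (of_bool (c = y) - of_bool (c = w) :: int)"
          using T3 yC xw t by (cases "c = y"; cases "c = w"; cases "c = x"; cases "c = t") auto
        then show ?thesis using S_upd[OF i, of V a1 c] ta1 unfolding T_def by simp
      qed
      have wa1: "win (V(i:=a1)) = x"
      proof (rule win_eq[OF xC])
        fix c assume c: "c \<in> set tb" "c \<noteq> x"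
        have ex: "S (V(i:=a1)) x = S V x" using Sa1[of x] yC xw by simp
        show "S (V(i:=a1)) c < S (V(i:=a1)) x"
        proof -
          consider "c = w" | "c = y" | "c = t" | "c \<noteq> w" "c \<noteq> y" "c \<noteq> t"  by blast
          then show ?thesis
          proof cases
            case 1 then show ?thesis using Sa1[of c] ex g2 yC by simp
          next
            case 2 then show ?thesis using Sa1[of c] ex g1 yAd yC by simp
          next
            case 3 then show ?thesis using Sa1[of c] ex tx t yC by simp
          next
            case 4 then show ?thesis using Sa1[of c] ex g4 c by simp
          qed
        qed
      qed
      have "gs_manipulation 3 tb N V i a1" using gs_same_win[OF gs a1v] wa1 x_def by simp
      then have "l \<le> card (T - top 3 a1)" by (rule minl)
      moreover have "T - top 3 a1 = {w}" using ta1 T3 yC xw t by auto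
      ultimately show False using l2' by simp
    qed
    have g5: "\<forall>c\<in>set tb. c \<noteq> w \<longrightarrow> c \<noteq> t \<longrightarrow> S V c < S V t"
    proof (intro ballI impI)
      fix c assume c: "c \<in> set tb" "c \<noteq> w" "c \<noteq> t"
      show "S V c < S V t"
      proof (cases "c = x")
        case True then show ?thesis using xt by simp
      next
        case False then show ?thesis using g4 c xt by fastforce
      qed
    qed
    show thesis
      apply (rule L2[of t Ad])
      using gs i wT xT xw xC l2' T3 t tC Ad AdC Ta2 g1 xt g5 g4 g2 g3 Sa2 unfolding l_def Ta_def by auto
  qed
qed

end

context G begin

lemma type_cases:
  assumes "minimal_manipulation 3 tb N V i a"
  shows "gs_manipulation 3 tb N V i a"
  using assms unfolding minimal_manipulation_def minimal_type1_def minimal_type2_def Let_def by auto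

lemma type1_not2: "minimal_type1 3 tb N V i a \<Longrightarrow> \<not> minimal_type2 3 tb N V i b"
  unfolding minimal_type1_def minimal_type2_def Let_def by auto

lemma min_top_unique:
  assumes "minimal_manipulation 3 tb N V i a" "minimal_manipulation 3 tb N V i b"
  shows "top 3 a = top 3 b"
proof -
  have ga: "gs_manipulation 3 tb N V i a" and gb: "gs_manipulation 3 tb N V i b"
    using assms type_cases by auto
  have xx: "win (V(i:=a)) = win (V(i:=b))" using gs_same[OF ga gb] .
  consider "minimal_type1 3 tb N V i a" | "minimal_type2 3 tb N V i a"
    using assms(1) unfolding minimal_manipulation_def by blast
  then show ?thesis
  proof cases
    case 1
    then have h1b: "minimal_type1 3 tb N V i b" using assms(2) type1_not2 unfolding minimal_manipulation_def by blast
    show ?thesis using type1(10)[OF 1] type1(10)[OF h1b] xx by simp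
  next
    case 2
    then have h2b: "minimal_type2 3 tb N V i b" using assms(2) type1_not2 unfolding minimal_manipulation_def by blast
    have la: "card (top 3 (V i) - top 3 a) \<le> card (top 3 (V i) - top 3 b)"
      using 2 gb unfolding minimal_type2_def Let_def by auto
    have lb: "card (top 3 (V i) - top 3 b) \<le> card (top 3 (V i) - top 3 a)"
      using h2b ga unfolding minimal_type2_def Let_def by auto
    from la lb have leq: "card (top 3 (V i) - top 3 a) = card (top 3 (V i) - top 3 b)" by simp
    show ?thesis
    using 2 proof (cases rule: type2)
      case L1
      show ?thesis
      using h2b proof (cases rule: type2)
        case L1
        then show ?thesis using \<open>top 3 a = insert (V i ! 3) (top 3 (V i) - {w})\<close> by simp
      next
        case (L2 t Ad)
        then show ?thesis using leq \<open>card (top 3 (V i) - top 3 a) = 1\<close> by simp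
      qed
    next
      case (L2 t Ad)
      note A = this
      show ?thesis
      using h2b proof (cases rule: type2)
        case L1
        then show ?thesis using leq A by simp
      next
        case (L2 t' Ad')
        then show ?thesis using A xx by simp
      qed
    qed
  qed
qed

lemma Mcancel: "S V c + M * u = S V c + M * v \<Longrightarrow> u = v"
  using Mpos by simp

end

locale G2 = G tb N V for tb :: "'c list" and N :: "'v set" and V :: "'v \<Rightarrow> 'c list" +
  fixes P :: "'v set" and a :: "'v \<Rightarrow> 'c list"
  assumes PN: "P \<subseteq> N" and man: "\<forall>p\<in>P. minimal_manipulation 3 tb N V p (a p)"
begin

abbreviation "W D \<equiv> win (prof a V D)"
abbreviation "SD D \<equiv> S (prof a V D)"
abbreviation "xx p \<equiv> win (V(p := a p))"
definition dl :: "'v \<Rightarrow> 'c \<Rightarrow> int" where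
  "dl p c = of_bool (c \<in> top 3 (a p)) - of_bool (c \<in> top 3 (V p))"

lemma pN: "p \<in> P \<Longrightarrow> p \<in> N" using PN by auto
lemma gsP: "p \<in> P \<Longrightarrow> gs_manipulation 3 tb N V p (a p)" using man type_cases by blast

lemma prof_single: "prof a V {p} = V(p := a p)"
  unfolding prof_def by auto

lemma S_single: "p \<in> P \<Longrightarrow> S (V(p := a p)) c = S V c + M * dl p c"
  using S_upd[OF pN, of p V "a p" c] unfolding dl_def by simp

lemma SD_pair: assumes "p \<in> P" "q \<in> P" "p \<noteq> q"
  shows "SD {q, p} c = S V c + M * (dl p c + dl q c)"
proof -
  have "prof a V {q, p} = (V(p := a p))(q := a q)" unfolding prof_def by auto
  moreover have "(V(p := a p)) q = V q" using assms by simp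
  ultimately have "SD {q, p} c = S (V(p := a p)) c + M * dl q c"
    using S_upd[OF pN[OF assms(2)], of "V(p := a p)" "a q" c] unfolding dl_def by simp
  then show ?thesis using S_single[OF assms(1)] by (simp add: algebra_simps)
qed

lemma W_pair_max: assumes "p \<in> P" "q \<in> P" "p \<noteq> q"
  shows "W {q, p} \<in> set tb"
    "\<And>c. c \<in> set tb \<Longrightarrow> c \<noteq> W {q, p} \<Longrightarrow> S V c + M * (dl p c + dl q c) < S V (W {q,p}) + M * (dl p (W {q,p}) + dl q (W {q,p}))"
  using win_max(1)[of "prof a V {q, p}"] win_max(2)[of _ "prof a V {q, p}"] SD_pair[OF assms] by auto

lemma x_max: assumes "p \<in> P"
  shows "xx p \<in> set tb" "\<And>c. c \<in> set tb \<Longrightarrow> c \<noteq> xx p \<Longrightarrow> S V c + M * dl p c < S V (xx p) + M * dl p (xx p)"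
  using win_max(1)[of "V(p := a p)"] win_max(2)[of _ "V(p := a p)"] S_single[OF assms] by auto

lemma x_pref: "p \<in> P \<Longrightarrow> prefers (V p) (xx p) w"
  using gs_basic(3)[OF gsP] by blast

lemma x_ne_w: "p \<in> P \<Longrightarrow> xx p \<noteq> w"
  using gs_basic(4)[OF gsP] by blast

lemma distV: "p \<in> P \<Longrightarrow> distinct (V p)" using Vi pN by blast
lemma setV: "p \<in> P \<Longrightarrow> set (V p) = set tb" using Vi pN by blast

lemma shape1:
  assumes "p \<in> P" "minimal_type1 3 tb N V p (a p)"
  obtains d where "w \<notin> top 3 (V p)" "xx p \<notin> top 3 (V p)" "d \<in> top 3 (V p)" "d \<in> set tb"
    "d \<noteq> xx p" "d \<noteq> w" "d = V p ! 2" "\<forall>c. dl p c = of_bool (c = xx p) - of_bool (c = d)"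
    "\<forall>c\<in>set tb. c \<noteq> xx p \<longrightarrow> S V c - M * of_bool (c = d) < S V (xx p) + M"
proof -
  note t = type1[OF assms(2)]
  have dlf: "dl p c = of_bool (c = xx p) - of_bool (c = V p ! 2)" for c
    by (rule Mcancel) (use t(11)[of c] S_single[OF assms(1), of c] in simp)
  show thesis apply (rule that[of "V p ! 2"]) using t dlf by auto
qed

lemma shapeL1:
  assumes "p \<in> P" "minimal_type2 3 tb N V p (a p)" "card (top 3 (V p) - top 3 (a p)) = 1"
  obtains "w \<in> top 3 (V p)" "xx p \<in> top 3 (V p)" "top 3 (a p) = insert (V p ! 3) (top 3 (V p) - {w})"
      "V p ! 3 \<in> set tb" "V p ! 3 \<notin> top 3 (V p)" "S V (V p ! 3) + M < S V (xx p)"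
      "\<forall>c\<in>set tb. c \<noteq> w \<longrightarrow> c \<noteq> xx p \<longrightarrow> S V c < S V (xx p)" "S V w - M < S V (xx p)"
      "\<forall>c. dl p c = of_bool (c = V p ! 3) - of_bool (c = w)"
using assms(2) proof (cases rule: type2)
  case L1
  note t = this
  have dlf: "dl p c = of_bool (c = V p ! 3) - of_bool (c = w)" for c
    by (rule Mcancel) (use spec[OF t(14), of c] S_single[OF assms(1), of c] in simp)
  show thesis apply (rule that) using t dlf by auto
next
  case (L2 t Ad)
  then show thesis using assms(3) by simp
qed

lemma shapeL2:
  assumes "p \<in> P" "minimal_type2 3 tb N V p (a p)" "card (top 3 (V p) - top 3 (a p)) \<noteq> 1"
  obtains t Ad where "w \<in> top 3 (V p)" "xx p \<in> top 3 (V p)"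
      "top 3 (V p) = {w, xx p, t}" "t \<noteq> w" "t \<noteq> xx p" "t \<in> set tb"
      "Ad \<subseteq> set tb" "Ad \<inter> top 3 (V p) = {}" "top 3 (a p) = insert (xx p) Ad"
      "\<forall>c\<in>Ad. S V c + M < S V (xx p)" "S V (xx p) < S V t"
      "\<forall>c\<in>set tb. c \<noteq> w \<longrightarrow> c \<noteq> t \<longrightarrow> S V c < S V t"
      "\<forall>c\<in>set tb. c \<noteq> w \<longrightarrow> c \<noteq> t \<longrightarrow> c \<noteq> xx p \<longrightarrow> S V c < S V (xx p)"
      "S V w - M < S V (xx p)" "S V t - M < S V (xx p)"
      "\<forall>c. dl p c = of_bool (c \<in> Ad) - of_bool (c = w \<or> c = t)"
using assms(2) proof (cases rule: type2)
  case L1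
  then show thesis using assms(3) by simp
next
  case (L2 t Ad)
  note tt = this
  have dlf: "dl p c = of_bool (c \<in> Ad) - of_bool (c = w \<or> c = t)" for c
    by (rule Mcancel) (use spec[OF tt(22), of c] S_single[OF assms(1), of c] in simp)
  show thesis apply (rule that[of t Ad]) using tt dlf by auto
qed

end

context G2 begin

lemma mono_M: "u \<le> v \<Longrightarrow> M * u \<le> M * v" using Mpos by simp

lemma TT:
  assumes i: "i \<in> P" "minimal_type1 3 tb N V i (a i)" and j: "j \<in> P" "minimal_type1 3 tb N V j (a j)"
    and ij: "i \<noteq> j" and le: "S V (xx j) \<le> S V (xx i)"
  shows "\<not> prefers (V j) (W {j, i}) (xx i)"
proof
  assume pr: "prefers (V j) (W {j, i}) (xx i)"
  obtain di where di: "w \<notin> top 3 (V i)" "xx i \<notin> top 3 (V i)" "di \<in> top 3 (V i)" "di \<in> set tb"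
    "di \<noteq> xx i" "di \<noteq> w" "di = V i ! 2" "\<forall>c. dl i c = of_bool (c = xx i) - of_bool (c = di)"
    "\<forall>c\<in>set tb. c \<noteq> xx i \<longrightarrow> S V c - M * of_bool (c = di) < S V (xx i) + M"
    by (rule shape1[OF i])
  obtain dj where dj: "w \<notin> top 3 (V j)" "xx j \<notin> top 3 (V j)" "dj \<in> top 3 (V j)" "dj \<in> set tb"
    "dj \<noteq> xx j" "dj \<noteq> w" "dj = V j ! 2" "\<forall>c. dl j c = of_bool (c = xx j) - of_bool (c = dj)"
    "\<forall>c\<in>set tb. c \<noteq> xx j \<longrightarrow> S V c - M * of_bool (c = dj) < S V (xx j) + M"
    by (rule shape1[OF j])
  define u where "u = W {j, i}"
  have uC: "u \<in> set tb" using W_pair_max(1)[OF i(1) j(1) ij] u_def by simp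
  have umax: "\<And>c. c \<in> set tb \<Longrightarrow> c \<noteq> u \<Longrightarrow> S V c + M * (dl i c + dl j c) < S V u + M * (dl i u + dl j u)"
    using W_pair_max(2)[OF i(1) j(1) ij] u_def by simp
  have ux: "u \<noteq> xx i" using pr prefers_irrefl[OF distV[OF j(1)]] u_def by metis
  have wC: "w \<in> set tb" by (rule win_max)
  have wmax: "\<And>c. c \<in> set tb \<Longrightarrow> c \<noteq> w \<Longrightarrow> S V c < S V w" using win_max(2) by blast
  have xiC: "xx i \<in> set tb" and xjC: "xx j \<in> set tb" using x_max(1) i j by auto
  have xiw: "xx i \<noteq> w" and xjw: "xx j \<noteq> w" using x_ne_w i j by auto
  show False
  proof (cases "xx i = dj")
    case True
    have "pos (V j) u < pos (V j) dj" using pr True prefers_pos[OF distV[OF j(1)]] u_def by simp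
    moreover have "pos (V j) dj < 3" using dj(3) top_pos[OF distV[OF j(1)]] by simp
    ultimately have "u \<in> top 3 (V j)" using top_pos[OF distV[OF j(1)]] uC setV[OF j(1)] by simp
    then have u1: "u \<noteq> xx j" "u \<noteq> w" "u \<noteq> dj" using dj ux True by auto
    have a1: "S V u < S V w" using wmax uC u1 by simp
    have a2: "dl i w = 0" "dl j w = 0" using di dj xiw xjw by auto
    have a3: "dl j u = 0" "dl i u \<le> 0" using dj di u1 ux by auto
    have a4: "M * (dl i u + dl j u) \<le> 0" using mono_M[of "dl i u + dl j u" 0] a3 by simp
    show False using umax[OF wC u1(2)[symmetric]] a1 a2 a4 by simp
  next
    case False
    have e1: "dl i (xx i) = 1" using di by simp
    have e2: "dl j (xx i) \<ge> 0" using dj False by auto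
    have e3: "M * (dl i (xx i) + dl j (xx i)) \<ge> M" using mono_M[of 1 "dl i (xx i) + dl j (xx i)"] e1 e2 by simp
    have m: "S V (xx i) + M * (dl i (xx i) + dl j (xx i)) < S V u + M * (dl i u + dl j u)"
      using umax[OF xiC ux[symmetric]] .
    show False
    proof (cases "u = xx j")
      case True
      then have "dl i u \<le> 0" "dl j u = 1" using di dj ux by auto
      then have "M * (dl i u + dl j u) \<le> M" using mono_M[of "dl i u + dl j u" 1] by simp
      then show False using m le True e3 by simp
    next
      case False
      have "dl j u \<le> 0" using dj False by auto
      moreover have "dl i u = - of_bool (u = di)" using di ux by simp
      ultimately have "M * (dl i u + dl j u) \<le> - M * of_bool (u = di)"
        using mono_M[of "dl i u + dl j u" "- of_bool (u = di)"] by simp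
      moreover have "S V u - M * of_bool (u = di) < S V (xx i) + M" using di(9) uC ux by blast
      ultimately show False using m e3 by simp
    qed
  qed
qed


lemma T2gen:
  assumes i: "i \<in> P" "minimal_type1 3 tb N V i (a i)" and j: "j \<in> P" and ij: "i \<noteq> j"
    and dlj: "\<forall>c. dl j c = of_bool (c \<in> Ad) - of_bool (c \<in> R)"
    and RT: "R \<subseteq> top 3 (V j)" and AdT: "Ad \<inter> top 3 (V j) = {}" and wR: "w \<in> R"
    and xjT: "xx j \<in> top 3 (V j)" and xjR: "xx j \<notin> R"
    and ru: "xx i \<in> R \<Longrightarrow> \<forall>c\<in>set tb. c \<noteq> w \<longrightarrow> c \<noteq> xx i \<longrightarrow> S V c < S V (xx i)"
  shows "\<not> prefers (V j) (W {j, i}) (xx i)"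
proof
  assume pr: "prefers (V j) (W {j, i}) (xx i)"
  obtain di where di: "w \<notin> top 3 (V i)" "xx i \<notin> top 3 (V i)" "di \<in> top 3 (V i)" "di \<in> set tb"
    "di \<noteq> xx i" "di \<noteq> w" "di = V i ! 2" "\<forall>c. dl i c = of_bool (c = xx i) - of_bool (c = di)"
    "\<forall>c\<in>set tb. c \<noteq> xx i \<longrightarrow> S V c - M * of_bool (c = di) < S V (xx i) + M"
    by (rule shape1[OF i])
  define u where "u = W {j, i}"
  have uC: "u \<in> set tb" using W_pair_max(1)[OF i(1) j ij] u_def by simp
  have umax: "\<And>c. c \<in> set tb \<Longrightarrow> c \<noteq> u \<Longrightarrow> S V c + M * (dl i c + dl j c) < S V u + M * (dl i u + dl j u)"
    using W_pair_max(2)[OF i(1) j ij] u_def by simp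
  have ux: "u \<noteq> xx i" using pr prefers_irrefl[OF distV[OF j]] u_def by metis
  have wC: "w \<in> set tb" by (rule win_max)
  have wmax: "\<And>c. c \<in> set tb \<Longrightarrow> c \<noteq> w \<Longrightarrow> S V c < S V w" using win_max(2) by blast
  have xiC: "xx i \<in> set tb" and xjC: "xx j \<in> set tb" using x_max(1) i j by auto
  have xiw: "xx i \<noteq> w" and xjw: "xx j \<noteq> w" using x_ne_w i j by auto
  have dljx: "dl j (xx j) = 0" using dlj xjR xjT AdT by auto
  have jsolo: "\<And>c. c \<in> set tb \<Longrightarrow> c \<noteq> xx j \<Longrightarrow> S V c + M * dl j c < S V (xx j)"
    using x_max(2)[OF j] dljx by simp
  have Sxjw: "S V (xx j) < S V w" using wmax xjC xjw by simp
  have iw: "S V w < S V (xx i) + M" using di(9) wC xiw di(6) by auto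
  have m: "S V (xx i) + M * (dl i (xx i) + dl j (xx i)) < S V u + M * (dl i u + dl j u)"
    using umax[OF xiC ux[symmetric]] .
  have dliu: "dl i u \<le> 0" using di ux by auto
  show False
  proof (cases "u \<in> Ad")
    case True
    then have uR: "u \<notin> R" "u \<noteq> xx j" using RT AdT xjT by auto
    then have dlju: "dl j u = 1" using dlj True by simp
    have "M * (dl i u + dl j u) \<le> M" using mono_M[of "dl i u + dl j u" 1] dliu dlju by simp
    then have A: "S V (xx i) + M * (dl i (xx i) + dl j (xx i)) < S V u + M" using m by simp
    have B: "S V u + M < S V (xx j)" using jsolo[OF uC uR(2)] dlju by simp
    show False
    proof (cases "xx i \<in> R")
      case False
      then have "dl i (xx i) + dl j (xx i) \<ge> 1" using di dlj by auto
      then have "M * (dl i (xx i) + dl j (xx i)) \<ge> M" using mono_M[of 1] by fastforce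
      then show False using A B Sxjw iw by simp
    next
      case True
      then have "dl i (xx i) + dl j (xx i) = 0" using di dlj RT AdT by auto
      moreover have "S V (xx j) < S V (xx i)" using ru[OF True] xjC xjw xjR True by auto
      ultimately show False using A B by simp
    qed
  next
    case False
    then have dlju: "dl j u \<le> 0" using dlj by auto
    show False
    proof (cases "xx i \<in> R")
      case False
      then have "dl i (xx i) + dl j (xx i) \<ge> 1" using di dlj by auto
      then have "M * (dl i (xx i) + dl j (xx i)) \<ge> M" using mono_M[of 1] by fastforce
      moreover have "M * (dl i u + dl j u) \<le> 0" using mono_M[of "dl i u + dl j u" 0] dliu dlju by simp
      moreover have "S V u \<le> S V w" using wmax[OF uC] by fastforce
      ultimately show False using m iw by simp
    next
      case True
      then have "dl i (xx i) + dl j (xx i) = 0" using di dlj RT AdT by auto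
      then have m2: "S V (xx i) < S V u + M * (dl i u + dl j u)" using m by simp
      show False
      proof (cases "u = w")
        case True
        then have "dl j u = -1" "dl i u = 0" using dlj wR False di xiw by auto
        then show False using m2 True iw by simp
      next
        case uw: False
        have "M * (dl i u + dl j u) \<le> 0" using mono_M[of "dl i u + dl j u" 0] dliu dlju by simp
        moreover have "S V u < S V (xx i)" using ru[OF True] uC uw ux by auto
        ultimately show False using m2 by simp
      qed
    qed
  qed
qed


lemma T2:
  assumes i: "i \<in> P" "minimal_type1 3 tb N V i (a i)" and j: "j \<in> P" "minimal_type2 3 tb N V j (a j)"
    and ij: "i \<noteq> j"
  shows "\<not> prefers (V j) (W {j, i}) (xx i)"
proof (cases "card (top 3 (V j) - top 3 (a j)) = 1")
  case True
  obtain "w \<in> top 3 (V j)" "xx j \<in> top 3 (V j)" "top 3 (a j) = insert (V j ! 3) (top 3 (V j) - {w})"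
      "V j ! 3 \<in> set tb" "V j ! 3 \<notin> top 3 (V j)" "S V (V j ! 3) + M < S V (xx j)"
      "\<forall>c\<in>set tb. c \<noteq> w \<longrightarrow> c \<noteq> xx j \<longrightarrow> S V c < S V (xx j)" "S V w - M < S V (xx j)"
      "\<forall>c. dl j c = of_bool (c = V j ! 3) - of_bool (c = w)"
    by (rule shapeL1[OF j True])
  note f = this
  show ?thesis
  proof (rule T2gen[OF i j(1) ij, of "{V j ! 3}" "{w}"])
    show "\<forall>c. dl j c = of_bool (c \<in> {V j ! 3}) - of_bool (c \<in> {w})" using f by simp
    show "xx j \<notin> {w}" using x_ne_w j by simp
    show "xx i \<in> {w} \<Longrightarrow> \<forall>c\<in>set tb. c \<noteq> w \<longrightarrow> c \<noteq> xx i \<longrightarrow> S V c < S V (xx i)"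
      using x_ne_w i by simp
  qed (use f in auto)
next
  case False
  obtain t Ad where f: "w \<in> top 3 (V j)" "xx j \<in> top 3 (V j)"
      "top 3 (V j) = {w, xx j, t}" "t \<noteq> w" "t \<noteq> xx j" "t \<in> set tb"
      "Ad \<subseteq> set tb" "Ad \<inter> top 3 (V j) = {}" "top 3 (a j) = insert (xx j) Ad"
      "\<forall>c\<in>Ad. S V c + M < S V (xx j)" "S V (xx j) < S V t"
      "\<forall>c\<in>set tb. c \<noteq> w \<longrightarrow> c \<noteq> t \<longrightarrow> S V c < S V t"
      "\<forall>c\<in>set tb. c \<noteq> w \<longrightarrow> c \<noteq> t \<longrightarrow> c \<noteq> xx j \<longrightarrow> S V c < S V (xx j)"
      "S V w - M < S V (xx j)" "S V t - M < S V (xx j)"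
      "\<forall>c. dl j c = of_bool (c \<in> Ad) - of_bool (c = w \<or> c = t)"
    by (rule shapeL2[OF j False])
  show ?thesis
  proof (rule T2gen[OF i j(1) ij, of Ad "{w, t}"])
    show "\<forall>c. dl j c = of_bool (c \<in> Ad) - of_bool (c \<in> {w, t})" using f by simp
    show "xx j \<notin> {w, t}" using x_ne_w j f by simp
    show "xx i \<in> {w, t} \<Longrightarrow> \<forall>c\<in>set tb. c \<noteq> w \<longrightarrow> c \<noteq> xx i \<longrightarrow> S V c < S V (xx i)"
      using x_ne_w[OF i(1)] f(12) by auto
  qed (use f in auto)
qed

lemma PP:
  assumes p: "p \<in> P" "minimal_type2 3 tb N V p (a p)" "card (top 3 (V p) - top 3 (a p)) \<noteq> 1"
    and q: "q \<in> P" "minimal_type2 3 tb N V q (a q)" "card (top 3 (V q) - top 3 (a q)) \<noteq> 1"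
    and pq: "p \<noteq> q"
  shows "\<not> prefers (V q) (W {q, p}) (xx p)"
proof
  assume pr: "prefers (V q) (W {q, p}) (xx p)"
  obtain t Ad where f: "w \<in> top 3 (V p)" "xx p \<in> top 3 (V p)"
      "top 3 (V p) = {w, xx p, t}" "t \<noteq> w" "t \<noteq> xx p" "t \<in> set tb"
      "Ad \<subseteq> set tb" "Ad \<inter> top 3 (V p) = {}" "top 3 (a p) = insert (xx p) Ad"
      "\<forall>c\<in>Ad. S V c + M < S V (xx p)" "S V (xx p) < S V t"
      "\<forall>c\<in>set tb. c \<noteq> w \<longrightarrow> c \<noteq> t \<longrightarrow> S V c < S V t"
      "\<forall>c\<in>set tb. c \<noteq> w \<longrightarrow> c \<noteq> t \<longrightarrow> c \<noteq> xx p \<longrightarrow> S V c < S V (xx p)"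
      "S V w - M < S V (xx p)" "S V t - M < S V (xx p)"
      "\<forall>c. dl p c = of_bool (c \<in> Ad) - of_bool (c = w \<or> c = t)"
    by (rule shapeL2[OF p])
  obtain t' Ad' where g: "w \<in> top 3 (V q)" "xx q \<in> top 3 (V q)"
      "top 3 (V q) = {w, xx q, t'}" "t' \<noteq> w" "t' \<noteq> xx q" "t' \<in> set tb"
      "Ad' \<subseteq> set tb" "Ad' \<inter> top 3 (V q) = {}" "top 3 (a q) = insert (xx q) Ad'"
      "\<forall>c\<in>Ad'. S V c + M < S V (xx q)" "S V (xx q) < S V t'"
      "\<forall>c\<in>set tb. c \<noteq> w \<longrightarrow> c \<noteq> t' \<longrightarrow> S V c < S V t'"
      "\<forall>c\<in>set tb. c \<noteq> w \<longrightarrow> c \<noteq> t' \<longrightarrow> c \<noteq> xx q \<longrightarrow> S V c < S V (xx q)"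
      "S V w - M < S V (xx q)" "S V t' - M < S V (xx q)"
      "\<forall>c. dl q c = of_bool (c \<in> Ad') - of_bool (c = w \<or> c = t')"
    by (rule shapeL2[OF q])
  have tt: "t' = t"
  proof (rule ccontr)
    assume "t' \<noteq> t"
    then have "S V t' < S V t" "S V t < S V t'" using f(12) g(12) f(6) g(6) f(4) g(4) by auto
    then show False by simp
  qed
  have xpC: "xx p \<in> set tb" and xqC: "xx q \<in> set tb" using x_max(1) p q by auto
  have xx: "xx q = xx p"
  proof (rule ccontr)
    assume ne: "xx q \<noteq> xx p"
    have "xx q \<noteq> w" "xx p \<noteq> w" using x_ne_w p q by auto
    then have "S V (xx q) < S V (xx p)" "S V (xx p) < S V (xx q)"
      using f(13) g(13) f(5) g(5) tt ne xpC xqC by auto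
    then show False by simp
  qed
  define r2 where "r2 = xx p"
  define u where "u = W {q, p}"
  have uC: "u \<in> set tb" using W_pair_max(1)[OF p(1) q(1) pq] u_def by simp
  have umax: "\<And>c. c \<in> set tb \<Longrightarrow> c \<noteq> u \<Longrightarrow> S V c + M * (dl p c + dl q c) < S V u + M * (dl p u + dl q u)"
    using W_pair_max(2)[OF p(1) q(1) pq] u_def by simp
  have ur: "u \<noteq> r2" using pr prefers_irrefl[OF distV[OF q(1)]] u_def r2_def by metis
  have rw: "r2 \<noteq> w" using x_ne_w p r2_def by auto
  have xpA: "xx p \<notin> Ad" "xx p \<notin> Ad'" using f(2,8) g(2,8) xx by auto
  have dlr: "dl p r2 = 0" "dl q r2 = 0" unfolding r2_def using f(5,16) g(16) tt xpA rw[unfolded r2_def] by auto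
  have m: "S V r2 < S V u + M * (dl p u + dl q u)" using umax[OF _ ur[symmetric]] xpC dlr r2_def by simp
  show False
  proof (cases "u \<in> Ad'")
    case True
    then have "u \<notin> top 3 (V q)" using g by auto
    moreover have "r2 \<in> top 3 (V q)" using g xx r2_def by simp
    ultimately have "prefers (V q) r2 u" using prefers_top[OF distV[OF q(1)]] uC setV[OF q(1)] by simp
    then show False using pr prefers_asym[OF distV[OF q(1)]] u_def r2_def by metis
  next
    case False
    then have dq: "dl q u = - of_bool (u = w \<or> u = t)" using g tt by simp
    show False
    proof (cases "u \<in> Ad")
      case True
      then have "u \<noteq> w" "u \<noteq> t" using f by auto
      then have "dl p u + dl q u = 1" using dq f True by simp
      moreover have "S V u + M < S V (xx p)" using f(10) True by blast
      ultimately show False using m r2_def by simp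
    next
      case uA: False
      then have dp: "dl p u = - of_bool (u = w \<or> u = t)" using f by simp
      show False
      proof (cases "u = w \<or> u = t")
        case True
        then have "dl p u + dl q u = -2" using dp dq by simp
        then have "S V r2 < S V u - 2 * M" using m by simp
        then show False using True f(14) f(15) r2_def Mpos by auto
      next
        case False
        then have "dl p u + dl q u = 0" using dp dq by simp
        then show False using m f(13) uC False ur r2_def by auto
      qed
    qed
  qed
qed

definition good :: "'v set \<Rightarrow> bool" where
  "good D \<longleftrightarrow> (\<forall>q\<in>P. \<not> prefers (V q) (W (insert q D)) (W D) \<and> \<not> prefers (V q) (W (D - {q})) (W D))"

lemma good_single:
  assumes p: "p \<in> P" and h: "\<And>q. q \<in> P \<Longrightarrow> q \<noteq> p \<Longrightarrow> \<not> prefers (V q) (W {q, p}) (xx p)"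
  shows "good {p}"
  unfolding good_def
proof
  fix q assume q: "q \<in> P"
  have Wp: "W {p} = xx p" using prof_single by simp
  show "\<not> prefers (V q) (W (insert q {p})) (W {p}) \<and> \<not> prefers (V q) (W ({p} - {q})) (W {p})"
  proof (cases "q = p")
    case True
    have "W {} = w" unfolding prof_def by simp
    then show ?thesis using True Wp prefers_irrefl[OF distV[OF p]] prefers_asym[OF distV[OF p]] x_pref[OF p] by simp
  next
    case False
    then have "{p} - {q} = {p}" by auto
    then show ?thesis using h[OF q False] Wp prefers_irrefl[OF distV[OF q]] False by simp
  qed
qed


lemma SD_ins: assumes "q \<in> P" "q \<notin> D" shows "SD (insert q D) c = SD D c + M * dl q c"
proof -
  have "prof a V D q = V q" using assms unfolding prof_def by simp
  then show ?thesis using S_upd[OF pN[OF assms(1)], of "prof a V D" "a q" c] prof_insert[of a V q D]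
    unfolding dl_def by simp
qed

lemma SD_rem: assumes "q \<in> P" "q \<in> D" shows "SD (D - {q}) c = SD D c - M * dl q c"
proof -
  have "prof a V D q = a q" using assms unfolding prof_def by simp
  then show ?thesis using S_upd[OF pN[OF assms(1)], of "prof a V D" "V q" c] prof_remove[of a V D q]
    unfolding dl_def by (simp add: algebra_simps)
qed

lemma SD_score: "SD D c - S V c = M * (int (score 3 N (prof a V D) c) - int (score 3 N V c))"
  unfolding st_def by (simp add: algebra_simps)

end

locale G3 = G2 tb N V P a for tb :: "'c list" and N :: "'v set" and V :: "'v \<Rightarrow> 'c list"
   and P :: "'v set" and a :: "'v \<Rightarrow> 'c list" +
  fixes i0 :: 'v
  assumes all2: "\<forall>p\<in>P. minimal_type2 3 tb N V p (a p)"
    and i0P: "i0 \<in> P" and i0L: "card (top 3 (V i0) - top 3 (a i0)) = 1"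
begin

definition Q1 :: "'v set" where "Q1 = {p \<in> P. card (top 3 (V p) - top 3 (a p)) = 1}"
abbreviation "r \<equiv> xx i0"

lemma Q1P: "Q1 \<subseteq> P" unfolding Q1_def by auto

lemma L1f:
  assumes q: "q \<in> Q1"
  shows "xx q = r" "w \<in> top 3 (V q)" "r \<in> top 3 (V q)" "top 3 (a q) = insert (V q ! 3) (top 3 (V q) - {w})"
      "V q ! 3 \<in> set tb" "V q ! 3 \<notin> top 3 (V q)" "S V (V q ! 3) + M < S V r"
      "\<forall>c\<in>set tb. c \<noteq> w \<longrightarrow> c \<noteq> r \<longrightarrow> S V c < S V r" "S V w - M < S V r"
      "\<forall>c. dl q c = of_bool (c = V q ! 3) - of_bool (c = w)"
proof -
  have qP: "q \<in> P" and qL: "card (top 3 (V q) - top 3 (a q)) = 1" using q unfolding Q1_def by auto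
  obtain f: "w \<in> top 3 (V q)" "xx q \<in> top 3 (V q)" "top 3 (a q) = insert (V q ! 3) (top 3 (V q) - {w})"
      "V q ! 3 \<in> set tb" "V q ! 3 \<notin> top 3 (V q)" "S V (V q ! 3) + M < S V (xx q)"
      "\<forall>c\<in>set tb. c \<noteq> w \<longrightarrow> c \<noteq> xx q \<longrightarrow> S V c < S V (xx q)" "S V w - M < S V (xx q)"
      "\<forall>c. dl q c = of_bool (c = V q ! 3) - of_bool (c = w)"
    by (rule shapeL1[OF qP all2[rule_format, OF qP] qL])
  obtain g: "\<forall>c\<in>set tb. c \<noteq> w \<longrightarrow> c \<noteq> r \<longrightarrow> S V c < S V r"
    using shapeL1[OF i0P all2[rule_format, OF i0P] i0L] by metis
  have xq: "xx q = r"
  proof (rule ccontr)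
    assume ne: "xx q \<noteq> r"
    have "xx q \<in> set tb" "r \<in> set tb" using x_max(1) qP i0P by auto
    moreover have "xx q \<noteq> w" "r \<noteq> w" using x_ne_w qP i0P by auto
    ultimately have "S V (xx q) < S V r" "S V r < S V (xx q)" using f(7) g ne by auto
    then show False by simp
  qed
  show "xx q = r" "w \<in> top 3 (V q)" "r \<in> top 3 (V q)" "top 3 (a q) = insert (V q ! 3) (top 3 (V q) - {w})"
      "V q ! 3 \<in> set tb" "V q ! 3 \<notin> top 3 (V q)" "S V (V q ! 3) + M < S V r"
      "\<forall>c\<in>set tb. c \<noteq> w \<longrightarrow> c \<noteq> r \<longrightarrow> S V c < S V r" "S V w - M < S V r"
      "\<forall>c. dl q c = of_bool (c = V q ! 3) - of_bool (c = w)"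
    using f xq by simp_all
qed

lemma rC: "r \<in> set tb" using x_max(1) i0P by auto
lemma rw: "r \<noteq> w" using x_ne_w i0P by auto

lemma L2f:
  assumes p: "p \<in> P" "p \<notin> Q1"
  obtains Ad where "w \<in> top 3 (V p)" "xx p \<in> top 3 (V p)"
      "top 3 (V p) = {w, xx p, r}" "r \<noteq> xx p"
      "Ad \<subseteq> set tb" "Ad \<inter> top 3 (V p) = {}" "top 3 (a p) = insert (xx p) Ad"
      "\<forall>c\<in>Ad. S V c + M < S V (xx p)" "S V (xx p) < S V r"
      "\<forall>c\<in>set tb. c \<noteq> w \<longrightarrow> c \<noteq> r \<longrightarrow> c \<noteq> xx p \<longrightarrow> S V c < S V (xx p)"
      "S V w - M < S V (xx p)" "S V r - M < S V (xx p)"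
      "\<forall>c. dl p c = of_bool (c \<in> Ad) - of_bool (c = w \<or> c = r)"
proof -
  have pL: "card (top 3 (V p) - top 3 (a p)) \<noteq> 1" using p unfolding Q1_def by auto
  obtain t Ad where f: "w \<in> top 3 (V p)" "xx p \<in> top 3 (V p)"
      "top 3 (V p) = {w, xx p, t}" "t \<noteq> w" "t \<noteq> xx p" "t \<in> set tb"
      "Ad \<subseteq> set tb" "Ad \<inter> top 3 (V p) = {}" "top 3 (a p) = insert (xx p) Ad"
      "\<forall>c\<in>Ad. S V c + M < S V (xx p)" "S V (xx p) < S V t"
      "\<forall>c\<in>set tb. c \<noteq> w \<longrightarrow> c \<noteq> t \<longrightarrow> S V c < S V t"
      "\<forall>c\<in>set tb. c \<noteq> w \<longrightarrow> c \<noteq> t \<longrightarrow> c \<noteq> xx p \<longrightarrow> S V c < S V (xx p)"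
      "S V w - M < S V (xx p)" "S V t - M < S V (xx p)"
      "\<forall>c. dl p c = of_bool (c \<in> Ad) - of_bool (c = w \<or> c = t)"
    by (rule shapeL2[OF p(1) all2[rule_format, OF p(1)] pL])
  have i0Q: "i0 \<in> Q1" using i0P i0L unfolding Q1_def by simp
  have g: "\<forall>c\<in>set tb. c \<noteq> w \<longrightarrow> c \<noteq> r \<longrightarrow> S V c < S V r" using L1f(8)[OF i0Q] .
  have tr: "t = r"
  proof (rule ccontr)
    assume ne: "t \<noteq> r"
    then have "S V t < S V r" "S V r < S V t" using f(12) g f(4,6) rC rw by auto
    then show False by simp
  qed
  show thesis apply (rule that[of Ad]) using f tr by simp_all
qed

lemma finQ1: "finite Q1" using Q1P PN finN finite_subset by metis

lemma Da: "D \<subseteq> Q1 \<Longrightarrow> SD D r = S V r"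
proof -
  assume D: "D \<subseteq> Q1"
  have "\<forall>q\<in>D. r \<in> top 3 (a q) \<longleftrightarrow> r \<in> top 3 (V q)" using D L1f(3,4) rw by auto
  then have "score 3 N (prof a V D) r = score 3 N V r" by (rule score_D_eq)
  then show ?thesis unfolding st_def by simp
qed

lemma Dc: "D \<subseteq> Q1 \<Longrightarrow> c \<noteq> w \<Longrightarrow> \<forall>q\<in>D. V q ! 3 \<noteq> c \<Longrightarrow> SD D c = S V c"
proof -
  assume D: "D \<subseteq> Q1" and c: "c \<noteq> w" "\<forall>q\<in>D. V q ! 3 \<noteq> c"
  have "\<forall>q\<in>D. c \<in> top 3 (a q) \<longleftrightarrow> c \<in> top 3 (V q)"
  proof
    fix q assume q: "q \<in> D"
    then have qQ: "q \<in> Q1" using D by auto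
    show "c \<in> top 3 (a q) \<longleftrightarrow> c \<in> top 3 (V q)" using L1f(4)[OF qQ] c q by auto
  qed
  then have "score 3 N (prof a V D) c = score 3 N V c" by (rule score_D_eq)
  then show ?thesis unfolding st_def by simp
qed

lemma De: "D \<subseteq> Q1 \<Longrightarrow> c \<noteq> w \<Longrightarrow> SD D c \<ge> S V c"
proof -
  assume D: "D \<subseteq> Q1" and c: "c \<noteq> w"
  have "\<forall>q\<in>D. c \<in> top 3 (V q) \<longrightarrow> c \<in> top 3 (a q)"
  proof (intro ballI impI)
    fix q assume q: "q \<in> D" "c \<in> top 3 (V q)"
    then have qQ: "q \<in> Q1" using D by auto
    show "c \<in> top 3 (a q)" using L1f(4)[OF qQ] c q by auto
  qed
  then have "score 3 N V c \<le> score 3 N (prof a V D) c" by (rule score_D_ge(1)[OF finN])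
  then have "M * (int (score 3 N (prof a V D) c) - int (score 3 N V c)) \<ge> 0"
    using mono_M[of 0] by fastforce
  then show ?thesis using SD_score[of D c] by simp
qed

lemma Db: "D \<subseteq> Q1 \<Longrightarrow> q \<in> D \<Longrightarrow> SD D (V q ! 3) \<ge> S V (V q ! 3) + M"
proof -
  assume D: "D \<subseteq> Q1" and q: "q \<in> D"
  have qQ: "q \<in> Q1" using D q by auto
  have yw: "V q ! 3 \<noteq> w" using L1f(2,6)[OF qQ] by auto
  moreover have h: "\<forall>q'\<in>D. V q ! 3 \<in> top 3 (V q') \<longrightarrow> V q ! 3 \<in> top 3 (a q')"
  proof (intro ballI impI)
    fix q' assume q': "q' \<in> D" "V q ! 3 \<in> top 3 (V q')"
    then have qQ': "q' \<in> Q1" using D by auto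
    show "V q ! 3 \<in> top 3 (a q')" using L1f(4)[OF qQ'] q' yw by auto
  qed
  have "score 3 N V (V q ! 3) < score 3 N (prof a V D) (V q ! 3)"
    by (rule score_D_ge(2)[OF finN h q]) (use qQ Q1P PN L1f(4,6)[OF qQ] in auto)
  then have "int (score 3 N (prof a V D) (V q ! 3)) - int (score 3 N V (V q ! 3)) \<ge> 1" by simp
  then have "M * (int (score 3 N (prof a V D) (V q ! 3)) - int (score 3 N V (V q ! 3))) \<ge> M"
    using mono_M[of 1] by fastforce
  then show ?thesis using SD_score[of D "V q ! 3"] by simp
qed

lemma Dd: "D \<subseteq> Q1 \<Longrightarrow> D \<noteq> {} \<Longrightarrow> SD D w \<le> S V w - M"
proof -
  assume D: "D \<subseteq> Q1" and ne: "D \<noteq> {}"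
  obtain q where q: "q \<in> D" using ne by auto
  have qQ: "q \<in> Q1" using D q by auto
  have h: "\<forall>q\<in>D. w \<in> top 3 (a q) \<longrightarrow> w \<in> top 3 (V q)"
  proof (intro ballI impI)
    fix q assume q: "q \<in> D" "w \<in> top 3 (a q)"
    then have qQ: "q \<in> Q1" using D by auto
    show "w \<in> top 3 (V q)" using L1f(2)[OF qQ] .
  qed
  have "score 3 N (prof a V D) w < score 3 N V w"
    by (rule score_D_le(2)[OF finN h q]) (use qQ Q1P PN L1f(2,4,6)[OF qQ] in auto)
  then have "int (score 3 N (prof a V D) w) - int (score 3 N V w) \<le> -1" by simp
  then have "M * (int (score 3 N (prof a V D) w) - int (score 3 N V w)) \<le> - M"
    using mono_M[of _ "-1"] by fastforce
  then show ?thesis using SD_score[of D w] by simp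
qed


lemma S_case: "\<exists>D\<subseteq>P. good D"
proof -
  have i0Q: "i0 \<in> Q1" using i0P i0L unfolding Q1_def by simp
  define F where "F = {D. D \<subseteq> Q1 \<and> D \<noteq> {} \<and> W D = r}"
  have finF: "finite F"
  proof -
    have "F \<subseteq> Pow Q1" unfolding F_def by auto
    then show ?thesis using finQ1 finite_subset by blast
  qed
  have i0F: "{i0} \<in> F" unfolding F_def using i0Q prof_single by simp
  define m where "m = Max (card ` F)"
  have "m \<in> card ` F" unfolding m_def using finF i0F by (intro Max_in) auto
  then obtain Sm where Sm: "Sm \<in> F" "card Sm = m" by auto
  have Smax: "\<And>D. D \<in> F \<Longrightarrow> card D \<le> card Sm" using Sm finF unfolding m_def by simp
  have SmQ: "Sm \<subseteq> Q1" and Smne: "Sm \<noteq> {}" and WSm: "W Sm = r" using Sm(1) unfolding F_def by auto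
  have finSm: "finite Sm" using SmQ finQ1 finite_subset by blast
  have SmP: "Sm \<subseteq> P" using SmQ Q1P by auto
  have SDr: "SD Sm r = S V r" using Da[OF SmQ] .
  have Smwin: "\<And>d. d \<in> set tb \<Longrightarrow> d \<noteq> r \<Longrightarrow> SD Sm d < S V r"
    using win_max(2)[of _ "prof a V Sm"] WSm SDr by metis
  have maxF: "\<exists>q''\<in>Sm. V q'' ! 3 = V q' ! 3" if q': "q' \<in> Q1" for q'
  proof (rule ccontr)
    assume no: "\<not> (\<exists>q''\<in>Sm. V q'' ! 3 = V q' ! 3)"
    then have q'S: "q' \<notin> Sm" by auto
    have q'P: "q' \<in> P" using q' Q1P by auto
    note lf = L1f[OF q']
    define c where "c = V q' ! 3"
    have cw: "c \<noteq> w" "c \<noteq> r" using lf(2,3,6) c_def by auto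
    have SDc: "SD Sm c = S V c" using Dc[OF SmQ cw(1)] no c_def by auto
    have dl': "\<And>d. dl q' d = of_bool (d = c) - of_bool (d = w)" using lf(10) c_def by simp
    have ins: "\<And>d. SD (insert q' Sm) d = SD Sm d + M * dl q' d" using SD_ins[OF q'P q'S] by simp
    have "W (insert q' Sm) = r"
    proof (rule win_eq[OF rC])
      fix d assume d: "d \<in> set tb" "d \<noteq> r"
      have er: "SD (insert q' Sm) r = S V r" using ins[of r] dl'[of r] cw rw SDr by simp
      show "SD (insert q' Sm) d < SD (insert q' Sm) r"
      proof (cases "d = c")
        case True
        then show ?thesis using ins[of d] dl'[of d] cw SDc er lf(7) c_def by simp
      next
        case False
        then have "dl q' d \<le> 0" using dl' by simp
        then have "M * dl q' d \<le> 0" using mono_M[of _ 0] by fastforce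
        then show ?thesis using ins[of d] Smwin[OF d] er by simp
      qed
    qed
    then have "insert q' Sm \<in> F" using SmQ q' unfolding F_def by auto
    then have "card (insert q' Sm) \<le> card Sm" by (rule Smax)
    then show False using q'S finSm by simp
  qed
  show ?thesis
  proof (cases "good Sm")
    case True then show ?thesis using SmP by blast
  next
    case False
    then obtain q where q: "q \<in> P" and viol: "prefers (V q) (W (insert q Sm)) r \<or> prefers (V q) (W (Sm - {q})) r"
      unfolding good_def using WSm by auto
    have dq: "distinct (V q)" using distV[OF q] .
    show ?thesis
    proof (cases "q \<in> Q1")
      case True
      note lf = L1f[OF True]
      define y where "y = V q ! 3"
      have dlq: "\<And>d. dl q d = of_bool (d = y) - of_bool (d = w)" using lf(10) y_def by simp
      have yr: "y \<noteq> r" "y \<noteq> w" using lf(2,3,6) y_def by auto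
      have False
      proof (cases "q \<in> Sm")
        case qS: True
        then have "insert q Sm = Sm" by auto
        then have pr: "prefers (V q) (W (Sm - {q})) r" using viol WSm prefers_irrefl[OF dq] by auto
        show False
        proof (cases "Sm - {q} = {}")
          case True
          have e0: "W {} = w" unfolding prof_def by simp
          have "W (Sm - {q}) = w" using e0 by (subst True)
          then show False using pr x_pref[OF q] lf(1) prefers_asym[OF dq] by metis
        next
          case ne: False
          have sub: "Sm - {q} \<subseteq> Q1" using SmQ by auto
          have "W (Sm - {q}) = r"
          proof (rule win_eq[OF rC])
            fix d assume d: "d \<in> set tb" "d \<noteq> r"
            have er: "SD (Sm - {q}) r = S V r" using Da[OF sub] .
            show "SD (Sm - {q}) d < SD (Sm - {q}) r"
            proof (cases "d = w")
              case True
              then show ?thesis using Dd[OF sub ne] er lf(9) by simp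
            next
              case False
              then have "dl q d \<ge> 0" using dlq by simp
              then have "M * dl q d \<ge> 0" using mono_M[of 0] by fastforce
              then show ?thesis using SD_rem[OF q qS, of d] Smwin[OF d] er by simp
            qed
          qed
          then show False using pr prefers_irrefl[OF dq] by simp
        qed
      next
        case qS: False
        then have "Sm - {q} = Sm" by auto
        then have pr: "prefers (V q) (W (insert q Sm)) r" using viol WSm prefers_irrefl[OF dq] by auto
        define u where "u = W (insert q Sm)"
        have uC: "u \<in> set tb" unfolding u_def by (rule win_max)
        have ur: "u \<noteq> r" using pr prefers_irrefl[OF dq] u_def by metis
        have ins: "\<And>d. SD (insert q Sm) d = SD Sm d + M * dl q d" using SD_ins[OF q qS] by simp
        show False
        proof (cases "u = y")
          case True
          have "prefers (V q) r y" using prefers_top[OF dq lf(3)] lf(5,6) setV[OF q] y_def by simp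
          then show False using pr True u_def prefers_asym[OF dq] by metis
        next
          case False
          then have "dl q u \<le> 0" using dlq by simp
          then have "M * dl q u \<le> 0" using mono_M[of _ 0] by fastforce
          then have "SD (insert q Sm) u < S V r" using ins[of u] Smwin[OF uC ur] by simp
          moreover have "SD (insert q Sm) r = S V r" using ins[of r] dlq[of r] yr rw SDr by simp
          moreover have "SD (insert q Sm) r < SD (insert q Sm) u"
            using win_max(2)[of r "prof a V (insert q Sm)"] rC ur u_def by metis
          ultimately show False by simp
        qed
      qed
      then show ?thesis by simp
    next
      case qQ: False
      obtain Ad where g: "w \<in> top 3 (V q)" "xx q \<in> top 3 (V q)"
          "top 3 (V q) = {w, xx q, r}" "r \<noteq> xx q"
          "Ad \<subseteq> set tb" "Ad \<inter> top 3 (V q) = {}" "top 3 (a q) = insert (xx q) Ad"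
          "\<forall>c\<in>Ad. S V c + M < S V (xx q)" "S V (xx q) < S V r"
          "\<forall>c\<in>set tb. c \<noteq> w \<longrightarrow> c \<noteq> r \<longrightarrow> c \<noteq> xx q \<longrightarrow> S V c < S V (xx q)"
          "S V w - M < S V (xx q)" "S V r - M < S V (xx q)"
          "\<forall>c. dl q c = of_bool (c \<in> Ad) - of_bool (c = w \<or> c = r)"
        by (rule L2f[OF q qQ])
      have qS: "q \<notin> Sm" using qQ SmQ by auto
      then have "Sm - {q} = Sm" by auto
      then have pr: "prefers (V q) (W (insert q Sm)) r" using viol WSm prefers_irrefl[OF dq] by auto
      define u where "u = W (insert q Sm)"
      have uC: "u \<in> set tb" unfolding u_def by (rule win_max)
      have ins: "\<And>d. SD (insert q Sm) d = SD Sm d + M * dl q d" using SD_ins[OF q qS] by simp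
      have xqC: "xx q \<in> set tb" using x_max(1)[OF q] .
      have xqw: "xx q \<noteq> w" using x_ne_w[OF q] .
      have xA: "xx q \<notin> Ad" using g(2,6) by auto
      have dlx: "dl q (xx q) = 0" using g(13) xA xqw g(4) by simp
      have Sx: "SD (insert q Sm) (xx q) = S V (xx q)"
      proof -
        have "\<forall>q''\<in>Sm. V q'' ! 3 \<noteq> xx q"
        proof
          fix q'' assume "q'' \<in> Sm"
          then have "q'' \<in> Q1" using SmQ by auto
          then have "S V (V q'' ! 3) + M < S V r" using L1f(7) by blast
          then show "V q'' ! 3 \<noteq> xx q" using g(12) by auto
        qed
        then have "SD Sm (xx q) = S V (xx q)" using Dc[OF SmQ xqw] by simp
        then show ?thesis using ins[of "xx q"] dlx by simp
      qed
      have uq: "u = xx q"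
      proof -
        have "u \<in> top 3 (V q)"
        proof (rule ccontr)
          assume un: "u \<notin> top 3 (V q)"
          have "r \<in> top 3 (V q)" using g(3) by simp
          then have "prefers (V q) r u" using prefers_top[OF dq _ _ un] uC setV[OF q] by simp
          then show False using pr u_def prefers_asym[OF dq] by metis
        qed
        moreover have "u \<noteq> r" using pr prefers_irrefl[OF dq] u_def by metis
        moreover have "u \<noteq> w"
        proof
          assume uw: "u = w"
          have "w \<notin> Ad" using g(1,6) by auto
          then have "dl q w = -1" using g(13) by simp
          then have "SD (insert q Sm) w \<le> S V w - 2 * M" using ins[of w] Dd[OF SmQ Smne] by simp
          moreover have "SD (insert q Sm) (xx q) < SD (insert q Sm) w"
            using win_max(2)[of "xx q" "prof a V (insert q Sm)"] xqC xqw uw u_def by metis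
          ultimately show False using Sx g(11) Mpos by simp
        qed
        ultimately show ?thesis using g(3) by auto
      qed
      have Wins: "\<And>d. d \<in> set tb \<Longrightarrow> d \<noteq> xx q \<Longrightarrow> SD (insert q Sm) d < S V (xx q)"
        using win_max(2)[of _ "prof a V (insert q Sm)"] uq u_def Sx by metis
      have "good {q}"
      proof (rule good_single[OF q])
        fix q' assume q': "q' \<in> P" "q' \<noteq> q"
        show "\<not> prefers (V q') (W {q', q}) (xx q)"
        proof (cases "q' \<in> Q1")
          case False
          have c1: "card (top 3 (V q) - top 3 (a q)) \<noteq> 1" using qQ q unfolding Q1_def by auto
          have c2: "card (top 3 (V q') - top 3 (a q')) \<noteq> 1" using False q' unfolding Q1_def by auto
          show ?thesis by (rule PP[OF q all2[rule_format, OF q] c1 q'(1) all2[rule_format, OF q'(1)] c2 q'(2)[symmetric]])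
        next
          case q'Q: True
          note lf = L1f[OF q'Q]
          define c where "c = V q' ! 3"
          have dl': "\<And>d. dl q' d = of_bool (d = c) - of_bool (d = w)" using lf(10) c_def by simp
          have cx: "c \<noteq> xx q" using lf(7) g(12) c_def by auto
          have cw: "c \<noteq> w" using lf(2,6) c_def by auto
          have cC: "c \<in> set tb" using lf(5) c_def by simp
          show ?thesis
          proof
            assume pr': "prefers (V q') (W {q', q}) (xx q)"
            define u' where "u' = W {q', q}"
            have u'C: "u' \<in> set tb" using W_pair_max(1)[OF q q'(1) q'(2)[symmetric]] u'_def by simp
            have umax: "\<And>d. d \<in> set tb \<Longrightarrow> d \<noteq> u' \<Longrightarrow> S V d + M * (dl q d + dl q' d) < S V u' + M * (dl q u' + dl q' u')"
              using W_pair_max(2)[OF q q'(1) q'(2)[symmetric]] u'_def by simp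
            have u'x: "u' \<noteq> xx q" using pr' prefers_irrefl[OF distV[OF q'(1)]] u'_def by metis
            have qsolo: "\<And>d. d \<in> set tb \<Longrightarrow> d \<noteq> xx q \<Longrightarrow> S V d + M * dl q d < S V (xx q)"
              using x_max(2)[OF q] dlx by simp
            have dlx': "dl q' (xx q) = 0" using dl' cx xqw by simp
            have m: "S V (xx q) < S V u' + M * (dl q u' + dl q' u')"
              using umax[OF xqC u'x[symmetric]] dlx dlx' by simp
            have u'c: "u' = c"
            proof (rule ccontr)
              assume "u' \<noteq> c"
              then have "dl q' u' \<le> 0" using dl' by simp
              then have "M * dl q' u' \<le> 0" using mono_M[of _ 0] by fastforce
              then show False using m qsolo[OF u'C u'x] by (simp add: distrib_left)
            qed
            have m2: "S V (xx q) < S V c + M * dl q c + M" using m u'c dl'[of c] cw by (simp add: distrib_left)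
            obtain q'' where q'': "q'' \<in> Sm" "V q'' ! 3 = c"
            proof (cases "q' \<in> Sm")
              case True then show ?thesis using that c_def by blast
            next
              case False then show ?thesis using maxF[OF q'Q] that c_def by metis
            qed
            have "SD Sm c \<ge> S V c + M" using Db[OF SmQ q''(1)] q''(2) by simp
            then have "SD (insert q Sm) c > S V (xx q)" using ins[of c] m2 by simp
            then show False using Wins[OF cC cx] by simp
          qed
        qed
      qed
      then show ?thesis using q by blast
    qed
  qed
qed

end

context G2 begin

lemma exists_good: "\<exists>D\<subseteq>P. good D"
proof (cases "P = {}")
  case True
  then show ?thesis unfolding good_def by auto
next
  case Pne: False
  have finP: "finite P" using PN finN finite_subset by blast
  show ?thesis
  proof (cases "\<exists>p\<in>P. minimal_type1 3 tb N V p (a p)")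
    case True
    define P1t where "P1t = {p \<in> P. minimal_type1 3 tb N V p (a p)}"
    have fin1: "finite P1t" using finP unfolding P1t_def by simp
    have ne1: "P1t \<noteq> {}" using True unfolding P1t_def by auto
    define m where "m = Max ((\<lambda>p. S V (xx p)) ` P1t)"
    have "m \<in> (\<lambda>p. S V (xx p)) ` P1t" unfolding m_def using fin1 ne1 by (intro Max_in) auto
    then obtain i where i: "i \<in> P1t" "S V (xx i) = m" by auto
    have imax: "\<And>j. j \<in> P1t \<Longrightarrow> S V (xx j) \<le> S V (xx i)" using i fin1 unfolding m_def by simp
    have iP: "i \<in> P" "minimal_type1 3 tb N V i (a i)" using i unfolding P1t_def by auto
    have "good {i}"
    proof (rule good_single[OF iP(1)])
      fix q assume q: "q \<in> P" "q \<noteq> i"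
      show "\<not> prefers (V q) (W {q, i}) (xx i)"
      proof (cases "minimal_type1 3 tb N V q (a q)")
        case True
        then have "q \<in> P1t" using q unfolding P1t_def by simp
        then show ?thesis using TT[OF iP q(1) True q(2)[symmetric]] imax by simp
      next
        case False
        then have "minimal_type2 3 tb N V q (a q)" using man q(1) unfolding minimal_manipulation_def by auto
        then show ?thesis using T2[OF iP q(1) _ q(2)[symmetric]] by simp
      qed
    qed
    then show ?thesis using iP by blast
  next
    case False
    then have all2: "\<forall>p\<in>P. minimal_type2 3 tb N V p (a p)" using man unfolding minimal_manipulation_def by auto
    show ?thesis
    proof (cases "\<exists>i0\<in>P. card (top 3 (V i0) - top 3 (a i0)) = 1")
      case True
      then obtain i0 where i0: "i0 \<in> P" "card (top 3 (V i0) - top 3 (a i0)) = 1" by blast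
      interpret G3 tb N V P a i0
        by unfold_locales (use all2 i0 in auto)
      show ?thesis by (rule S_case)
    next
      case False
      obtain p where p: "p \<in> P" using Pne by auto
      have "good {p}"
      proof (rule good_single[OF p])
        fix q assume q: "q \<in> P" "q \<noteq> p"
        show "\<not> prefers (V q) (W {q, p}) (xx p)"
          by (rule PP) (use p q all2 False in auto)
      qed
      then show ?thesis using p by blast
    qed
  qed
qed

end

theorem mainTheorem3:
  fixes C :: "'c set" and tb :: "'c list" and N :: "'v set"
    and V :: "'v \<Rightarrow> 'c list" and A :: "'v \<Rightarrow> 'c list set"
  assumes "finite C" and "C \<noteq> {}"
    and "is_vote C tb"
    and "finite N"
    and "\<forall>i \<in> N. is_vote C (V i)"
    and "gs_game 3 tb N V A"
    and "minimality_assumption 3 tb N V A"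
  shows "\<exists>s. pure_nash 3 tb N V A s"
proof -
  have Ctb: "set tb = C" and dtb: "distinct tb" using assms(3) unfolding is_vote_def by auto
  have tbne: "tb \<noteq> []" using Ctb assms(2) by auto
  interpret G tb N V
    by unfold_locales (use dtb tbne assms(4,5) Ctb in auto)
  define P' where "P' = {p \<in> players 3 tb N V. \<exists>b\<in>A p. gs_manipulation 3 tb N V p b}"
  define a where "a p = (SOME b. b \<in> A p \<and> gs_manipulation 3 tb N V p b)" for p
  have aP: "a p \<in> A p \<and> gs_manipulation 3 tb N V p (a p)" if pp: "p \<in> P'" for p
  proof -
    obtain b where "b \<in> A p \<and> gs_manipulation 3 tb N V p b" using pp unfolding P'_def by auto
    then show ?thesis unfolding a_def by (rule someI)
  qed
  have playN: "players 3 tb N V \<subseteq> N" unfolding players_def by auto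
  have P'pl: "P' \<subseteq> players 3 tb N V" unfolding P'_def by auto
  have game: "\<And>i. i \<in> players 3 tb N V \<Longrightarrow> V i \<in> A i \<and> A i \<subseteq> insert (V i) {v'. gs_manipulation 3 tb N V i v'}"
    using assms(6) unfolding gs_game_def by auto
  have mina: "\<And>j b. j \<in> players 3 tb N V \<Longrightarrow> b \<in> A j \<Longrightarrow> gs_manipulation 3 tb N V j b \<Longrightarrow> minimal_manipulation 3 tb N V j b"
    using assms(7) unfolding minimality_assumption_def by auto
  interpret G2 tb N V P' a
  proof unfold_locales
    show "P' \<subseteq> N" using P'pl playN by auto
    show "\<forall>p\<in>P'. minimal_manipulation 3 tb N V p (a p)"
      using aP mina P'pl by blast
  qed
  obtain D where D: "D \<subseteq> P'" "good D" using exists_good by blast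
  define s where "s = prof a V D"
  have "pure_nash 3 tb N V A s"
    unfolding pure_nash_def
  proof (intro conjI)
    show "action_profile 3 tb N V A s"
      unfolding action_profile_def s_def prof_def
      using D(1) aP game P'pl by auto
    show "\<forall>i\<in>players 3 tb N V. \<forall>b\<in>A i. \<not> prefers (V i) (kapp 3 tb N (s(i := b))) (kapp 3 tb N s)"
    proof (intro ballI)
      fix i b assume i: "i \<in> players 3 tb N V" and b: "b \<in> A i"
      have iN: "i \<in> N" using i playN by auto
      have di: "distinct (V i)" using Vi[OF iN] by simp
      have gd: "\<not> prefers (V i) (W (insert i D)) (W D) \<and> \<not> prefers (V i) (W (D - {i})) (W D)" if "i \<in> P'"
        using D(2) that unfolding good_def by blast
      consider "b = V i" | "gs_manipulation 3 tb N V i b" using game[OF i] b by auto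
      then show "\<not> prefers (V i) (kapp 3 tb N (s(i := b))) (kapp 3 tb N s)"
      proof cases
        case 1
        then have e: "s(i := b) = prof a V (D - {i})" unfolding s_def using prof_remove by metis
        show ?thesis
        proof (cases "i \<in> P'")
          case True
          then show ?thesis using gd e s_def by simp
        next
          case False
          then have "D - {i} = D" using D(1) by auto
          then show ?thesis using e s_def prefers_irrefl[OF di] by simp
        qed
      next
        case 2
        then have iP: "i \<in> P'" unfolding P'_def using i b by auto
        have mb: "minimal_manipulation 3 tb N V i b" using mina[OF i b 2] .
        have ma: "minimal_manipulation 3 tb N V i (a i)" using mina[OF i] aP[OF iP] by blast
        have tt: "top 3 b = top 3 (a i)" using min_top_unique[OF mb ma] .
        have "kapp 3 tb N (s(i := b)) = kapp 3 tb N (prof a V (insert i D))"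
          by (rule kapp_cong) (use tt in \<open>simp add: s_def prof_def\<close>)
        then show ?thesis using gd[OF iP] s_def by simp
      qed
    qed
  qed
  then show ?thesis by blast
qed

end
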